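(* Let $\mathcal L=\mathcal L^h_{N,M}$ and $\|\cdot\|_{\mathcal L}$ be as in the context. Then: (1) $\|\cdot\|_{\mathcal L}$ is a norm on $\mathcal L$; (2) this norm is stronger than the standard operator norm $\|\cdot\|_{\mathcal B}$ of bounded operators on $L^2([0,1)^N,\mathbb C^M)$; (3) convergence of a sequence in $\mathcal L$ with respect to $\|\cdot\|_{\mathcal L}$ is equivalent to uniform convergence of all its coefficient functions $\mathbf A_\alpha$; (4) $(\mathcal L,\|\cdot\|_{\mathcal L})$, with composition of operators as multiplication, is an associative (not necessarily commutative) Banach algebra; in particular $\mathcal A\mathcal B\in\mathcal L$ and $\|\mathcal A\mathcal B\|_{\mathcal L}\le\|\mathcal A\|_{\mathcal L}\|\mathcal B\|_{\mathcal L}$ for all $\mathcal A,\mathcal B\in\mathcal L$.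
   Context: Let $N,M,p$ be positive integers and $h=1/p$. Let $I_N$ be the set of all subsets of $\{1,\dots,N\}$; for $\alpha\in I_N$, $|\alpha|$ is its cardinality and $\bar\alpha$ its complement in $\{1,\dots,N\}$. For $\mathbf x=(x_i)$ write $\mathbf x_\alpha=(x_i)_{i\in\alpha}\in[0,1)^{|\alpha|}$, components in increasing order of indices. For disjoint $\alpha,\beta$, $\mathbf y_\beta\diamond\mathbf x_\alpha=\mathbf x_\alpha\diamond\mathbf y_\beta=\mathbf z_{\alpha\cup\beta}$ where $z_i=x_i$ for $i\in\alpha$ and $z_i=y_i$ for $i\in\beta$. Write $\langle f\rangle_\alpha=\int_{[0,1)^{|\alpha|}}f\,d\mathbf x_\alpha$ with $d\mathbf x_\alpha=\prod_{i\in\alpha}dx_i$, and $\langle f\rangle_\emptyset=f$. Let $\chi^h_i$ be the indicator of $[i/p,(i+1)/p)$. A function $A(y_1,\dots,y_R)$ on $[0,1)^R$ is $h$-staircase if it is a finite linear combination of functions $\prod_{j=1}^R\chi^h_{i_j}(y_j)$; a matrix-valued function is $h$-staircase if all its entries are. $\mathcal L^h_{N,M}$ is the set of operators $\mathcal A$ on $L^2([0,1)^N,\mathbb C^M)$ of the form $(\mathcal A\mathbf u)(\mathbf k)=\sum_{\alpha\in I_N}\langle\mathbf A_\alpha(\mathbf k,\mathbf x_\alpha)\mathbf u(\mathbf k_{\bar\alpha}\diamond\mathbf x_\alpha)\rangle_\alpha$, $\mathbf k\in[0,1)^N$, where each $\mathbf A_\alpha=(a_{i,j,\alpha})_{i,j=1}^M$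 is an $h$-staircase $M\times M$ matrix-valued function of $(\mathbf k,\mathbf x_\alpha)\in[0,1)^N\times[0,1)^{|\alpha|}$ (these coefficients are uniquely determined by $\mathcal A$). Define $\|\mathcal A\|_{\mathcal L}=\sum_{\alpha\in I_N}\max_{(\mathbf k,\mathbf x_\alpha),\,i}\sum_{j=1}^M|a_{i,j,\alpha}(\mathbf k,\mathbf x_\alpha)|$. *)

theory Defs
  imports "HOL-Analysis.Analysis"
begin

text \<open>Coordinates of [0,1)^N are indexed by a finite type 'n (CARD('n) = N),
  components of C^M by a finite type 'm (CARD('m) = M).  Points of [0,1)^{|alpha|}
  are extensional functions on alpha (PiE alpha).\<close>

definition chi :: "nat \<Rightarrow> nat \<Rightarrow> real \<Rightarrow> real" where
  "chi p i y = indicator {real i / real p ..< (real i + 1) / real p} y"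

text \<open>h-staircase (h = 1/p) complex function of the variables indexed by I, on [0,1)^I:
  a finite linear combination of products of the indicators chi.\<close>
definition staircase :: "nat \<Rightarrow> 'i set \<Rightarrow> (('i \<Rightarrow> real) \<Rightarrow> complex) \<Rightarrow> bool" where
  "staircase p I f \<longleftrightarrow>
     (\<exists>(C :: ('i \<Rightarrow> nat) set) (c :: ('i \<Rightarrow> nat) \<Rightarrow> complex). finite C \<and>
        (\<forall>z \<in> I \<rightarrow>\<^sub>E {0..<1}. f z = (\<Sum>j\<in>C. c j * complex_of_real (\<Prod>i\<in>I. chi p (j i) (z i)))))"

text \<open>A coefficient family: A alpha k x is the matrix A_alpha(k, x_alpha).  It is required to
  be an h-staircase matrix-valued function of the N + |alpha| variables (k, x_alpha),
  i.e. every entry is h-staircase.\<close>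
type_synonym ('n, 'm) coeffs = "'n set \<Rightarrow> ('n \<Rightarrow> real) \<Rightarrow> ('n \<Rightarrow> real) \<Rightarrow> complex^'m^'m"

definition is_coeffs :: "nat \<Rightarrow> ('n::finite, 'm::finite) coeffs \<Rightarrow> bool" where
  "is_coeffs p A \<longleftrightarrow>
     (\<forall>\<alpha> r s. staircase p (UNIV <+> \<alpha>) (\<lambda>z. A \<alpha> (\<lambda>i. z (Inl i)) (\<lambda>i. z (Inr i)) $ r $ s))"

definition unitI :: "real measure" where
  "unitI = restrict_space lborel {0..<1}"

definition cube :: "'n set \<Rightarrow> ('n \<Rightarrow> real) measure" where
  "cube \<alpha> = PiM \<alpha> (\<lambda>_. unitI)"

definition merge_pt :: "'n set \<Rightarrow> ('n \<Rightarrow> real) \<Rightarrow> ('n \<Rightarrow> real) \<Rightarrow> ('n \<Rightarrow> real)" where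
  "merge_pt \<alpha> k x = (\<lambda>i. if i \<in> \<alpha> then x i else k i)"

definition opL :: "('n::finite, 'm::finite) coeffs \<Rightarrow> (('n \<Rightarrow> real) \<Rightarrow> complex^'m) \<Rightarrow> ('n \<Rightarrow> real) \<Rightarrow> complex^'m" where
  "opL A u k = (\<Sum>\<alpha>\<in>UNIV. \<integral>x. A \<alpha> k x *v u (merge_pt \<alpha> k x) \<partial>cube \<alpha>)"

definition isL2 :: "(('n::finite \<Rightarrow> real) \<Rightarrow> complex^'m::finite) \<Rightarrow> bool" where
  "isL2 u \<longleftrightarrow> u \<in> borel_measurable (cube UNIV) \<and> integrable (cube UNIV) (\<lambda>k. (norm (u k))\<^sup>2)"

definition L2norm :: "(('n::finite \<Rightarrow> real) \<Rightarrow> complex^'m::finite) \<Rightarrow> real" where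
  "L2norm u = sqrt (\<integral>k. (norm (u k))\<^sup>2 \<partial>cube UNIV)"

definition dom_pts :: "'n set \<Rightarrow> (('n \<Rightarrow> real) \<times> ('n \<Rightarrow> real)) set" where
  "dom_pts \<alpha> = (UNIV \<rightarrow>\<^sub>E {0..<1}) \<times> (\<alpha> \<rightarrow>\<^sub>E {0..<1})"

definition normL :: "('n::finite, 'm::finite) coeffs \<Rightarrow> real" where
  "normL A = (\<Sum>\<alpha>\<in>UNIV. Max {(\<Sum>j\<in>UNIV. norm (A \<alpha> k x $ i $ j)) | k x i. (k, x) \<in> dom_pts \<alpha>})"

definition addL :: "('n, 'm::finite) coeffs \<Rightarrow> ('n, 'm) coeffs \<Rightarrow> ('n, 'm) coeffs" where
  "addL A B = (\<lambda>\<alpha> k x. A \<alpha> k x + B \<alpha> k x)"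

definition diffL :: "('n, 'm::finite) coeffs \<Rightarrow> ('n, 'm) coeffs \<Rightarrow> ('n, 'm) coeffs" where
  "diffL A B = (\<lambda>\<alpha> k x. A \<alpha> k x - B \<alpha> k x)"

definition scaleL :: "complex \<Rightarrow> ('n, 'm::finite) coeffs \<Rightarrow> ('n, 'm) coeffs" where
  "scaleL c A = (\<lambda>\<alpha> k x. (\<chi> i j. c * (A \<alpha> k x $ i $ j)))"

end

theory Submission
  imports Defs "HOL-Probability.Probability"
begin

definition cidx :: "nat \<Rightarrow> real \<Rightarrow> nat" where
  "cidx p y = nat \<lfloor>real p * y\<rfloor>"

lemma cidx_lt: "p > 0 \<Longrightarrow> 0 \<le> y \<Longrightarrow> y < 1 \<Longrightarrow> cidx p y < p"
proof -
  assume a: "p > 0" "0 \<le> y" "y < 1"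
  have "real p * y < real p" using a by simp
  then have "\<lfloor>real p * y\<rfloor> < int p" by (simp add: floor_less_iff)
  then show ?thesis unfolding cidx_def using a by (simp add: nat_less_iff)
qed

lemma chi_cidx:
  assumes "p > 0" "0 \<le> y"
  shows "chi p i y = (if i = cidx p y then 1 else 0)"
proof -
  have pp: "real p > 0" using assms by simp
  have "y \<in> {real i / real p ..< (real i + 1) / real p} \<longleftrightarrow> real i \<le> real p * y \<and> real p * y < real i + 1"
    using pp by (auto simp: field_simps)
  also have "\<dots> \<longleftrightarrow> \<lfloor>real p * y\<rfloor> = int i"
    by (simp add: floor_eq_iff)
  also have "\<dots> \<longleftrightarrow> i = cidx p y"
    using assms unfolding cidx_def by auto
  finally show ?thesis unfolding chi_def by (simp add: indicator_def)
qed

definition rep :: "nat \<Rightarrow> nat \<Rightarrow> real" where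
  "rep p n = real n / real p"

lemma rep_in: "n < p \<Longrightarrow> rep p n \<in> {0..<1}"
  by (auto simp: rep_def)

lemma cidx_rep: "p > 0 \<Longrightarrow> cidx p (rep p n) = n"
  by (simp add: cidx_def rep_def)

lemma staircase_iff:
  assumes p: "p > 0" and fin: "finite I"
  shows "staircase p I f \<longleftrightarrow>
    (\<forall>z\<in>I \<rightarrow>\<^sub>E {0..<1}. \<forall>z'\<in>I \<rightarrow>\<^sub>E {0..<1}. (\<forall>i\<in>I. cidx p (z i) = cidx p (z' i)) \<longrightarrow> f z = f z')"
proof
  assume "staircase p I f"
  then obtain C c where C: "finite C"
    and f: "\<forall>z \<in> I \<rightarrow>\<^sub>E {0..<1}. f z = (\<Sum>j\<in>C. c j * complex_of_real (\<Prod>i\<in>I. chi p (j i) (z i)))"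
    unfolding staircase_def by blast
  have pr: "(\<Prod>i\<in>I. chi p (j i) (z i)) = (if \<forall>i\<in>I. j i = cidx p (z i) then 1 else 0)"
    if "z \<in> I \<rightarrow>\<^sub>E {0..<1}" for z j
  proof -
    have "(\<Prod>i\<in>I. chi p (j i) (z i)) = (\<Prod>i\<in>I. (if j i = cidx p (z i) then 1 else 0))"
      using that p by (intro prod.cong) (auto simp: chi_cidx PiE_def Pi_def)
    also have "\<dots> = (if \<forall>i\<in>I. j i = cidx p (z i) then 1 else 0)"
      using fin by (induction I rule: finite_induct) auto
    finally show ?thesis .
  qed
  show "\<forall>z\<in>I \<rightarrow>\<^sub>E {0..<1}. \<forall>z'\<in>I \<rightarrow>\<^sub>E {0..<1}. (\<forall>i\<in>I. cidx p (z i) = cidx p (z' i)) \<longrightarrow> f z = f z'"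
    using f pr by simp
next
  assume H: "\<forall>z\<in>I \<rightarrow>\<^sub>E {0..<1}. \<forall>z'\<in>I \<rightarrow>\<^sub>E {0..<1}. (\<forall>i\<in>I. cidx p (z i) = cidx p (z' i)) \<longrightarrow> f z = f z'"
  define C where "C = I \<rightarrow>\<^sub>E {..<p}"
  define c where "c j = f (\<lambda>i\<in>I. rep p (j i))" for j :: "_ \<Rightarrow> nat"
  have "finite C" unfolding C_def using fin by (simp add: finite_PiE)
  moreover have "f z = (\<Sum>j\<in>C. c j * complex_of_real (\<Prod>i\<in>I. chi p (j i) (z i)))"
    if z: "z \<in> I \<rightarrow>\<^sub>E {0..<1}" for z
  proof -
    define j0 where "j0 = (\<lambda>i\<in>I. cidx p (z i))"
    have j0C: "j0 \<in> C" unfolding C_def j0_def using z p cidx_lt by (auto simp: PiE_def Pi_def)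
    have pr: "(\<Prod>i\<in>I. chi p (j i) (z i)) = (if j = j0 then 1 else 0)" if "j \<in> C" for j
    proof -
      have "(\<Prod>i\<in>I. chi p (j i) (z i)) = (\<Prod>i\<in>I. (if j i = cidx p (z i) then 1 else 0))"
        using z p by (intro prod.cong) (auto simp: chi_cidx PiE_def Pi_def)
      also have "\<dots> = (if \<forall>i\<in>I. j i = cidx p (z i) then 1 else 0)"
        using fin by (induction I rule: finite_induct) auto
      also have "(\<forall>i\<in>I. j i = cidx p (z i)) \<longleftrightarrow> j = j0"
        using that unfolding C_def j0_def by (auto simp: PiE_def extensional_def)
      finally show ?thesis by simp
    qed
    have "(\<Sum>j\<in>C. c j * complex_of_real (\<Prod>i\<in>I. chi p (j i) (z i))) = (\<Sum>j\<in>C. if j = j0 then c j else 0)"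
      by (intro sum.cong) (auto simp: pr)
    also have "\<dots> = c j0" using j0C \<open>finite C\<close> by simp
    also have "\<dots> = f z" unfolding c_def
    proof -
      have a: "(\<lambda>i\<in>I. rep p (j0 i)) \<in> I \<rightarrow>\<^sub>E {0..<1}" using j0C rep_in unfolding C_def by (auto simp: PiE_def Pi_def)
      have b: "\<forall>i\<in>I. cidx p ((\<lambda>i\<in>I. rep p (j0 i)) i) = cidx p (z i)"
        using p by (simp add: cidx_rep j0_def)
      show "f (\<lambda>i\<in>I. rep p (j0 i)) = f z" using H a z b by blast
    qed
    finally show ?thesis by simp
  qed
  ultimately show "staircase p I f" unfolding staircase_def by blast
qed

definition samecell :: "nat \<Rightarrow> 'n set \<Rightarrow> ('n \<Rightarrow> real) \<Rightarrow> ('n \<Rightarrow> real) \<Rightarrow> ('n \<Rightarrow> real) \<Rightarrow> ('n \<Rightarrow> real) \<Rightarrow> bool" where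
  "samecell p \<alpha> k x k' x' \<longleftrightarrow> (\<forall>i. cidx p (k i) = cidx p (k' i)) \<and> (\<forall>i\<in>\<alpha>. cidx p (x i) = cidx p (x' i))"

definition cc :: "nat \<Rightarrow> 'n set \<Rightarrow> (('n \<Rightarrow> real) \<Rightarrow> ('n \<Rightarrow> real) \<Rightarrow> 'b) \<Rightarrow> bool" where
  "cc p \<alpha> g \<longleftrightarrow> (\<forall>k x k' x'. (k, x) \<in> dom_pts \<alpha> \<longrightarrow> (k', x') \<in> dom_pts \<alpha> \<longrightarrow> samecell p \<alpha> k x k' x' \<longrightarrow> g k x = g k' x')"

lemma split_dom:
  assumes "z \<in> (UNIV <+> \<alpha>) \<rightarrow>\<^sub>E {0..<1}"
  shows "((\<lambda>i. z (Inl i)), (\<lambda>i. z (Inr i))) \<in> dom_pts \<alpha>"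
  using assms unfolding dom_pts_def by (auto simp: PiE_def Pi_def extensional_def)

lemma join_dom:
  assumes "(k, x) \<in> dom_pts \<alpha>"
  shows "case_sum k x \<in> (UNIV <+> \<alpha>) \<rightarrow>\<^sub>E {0..<1}"
  using assms unfolding dom_pts_def by (auto simp: PiE_def Pi_def extensional_def split: sum.splits)

lemma is_coeffs_iff:
  fixes A :: "('n::finite, 'm::finite) coeffs"
  assumes p: "p > 0"
  shows "is_coeffs p A \<longleftrightarrow> (\<forall>\<alpha>. cc p \<alpha> (A \<alpha>))"
proof -
  have fin: "finite ((UNIV::'n set) <+> \<alpha>)" for \<alpha> :: "'n set" by simp
  have "staircase p (UNIV <+> \<alpha>) (\<lambda>z. A \<alpha> (\<lambda>i. z (Inl i)) (\<lambda>i. z (Inr i)) $ r $ s) \<longleftrightarrow>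
    (\<forall>k x k' x'. (k, x) \<in> dom_pts \<alpha> \<longrightarrow> (k', x') \<in> dom_pts \<alpha> \<longrightarrow> samecell p \<alpha> k x k' x' \<longrightarrow> A \<alpha> k x $ r $ s = A \<alpha> k' x' $ r $ s)"
    for \<alpha> r s
  proof -
    have c: "(\<forall>i\<in>UNIV <+> \<alpha>. cidx p (z i) = cidx p (z' i)) \<longleftrightarrow> samecell p \<alpha> (\<lambda>i. z (Inl i)) (\<lambda>i. z (Inr i)) (\<lambda>i. z' (Inl i)) (\<lambda>i. z' (Inr i))" for z z'
      unfolding samecell_def by auto
    show ?thesis
      unfolding staircase_iff[OF p fin]
    proof (intro iffI allI impI)
      fix k x k' x'
      assume H: "\<forall>z\<in>(UNIV <+> \<alpha>) \<rightarrow>\<^sub>E {0..<1}. \<forall>z'\<in>(UNIV <+> \<alpha>) \<rightarrow>\<^sub>E {0..<1}. (\<forall>i\<in>UNIV <+> \<alpha>. cidx p (z i) = cidx p (z' i)) \<longrightarrow>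
         A \<alpha> (\<lambda>i. z (Inl i)) (\<lambda>i. z (Inr i)) $ r $ s = A \<alpha> (\<lambda>i. z' (Inl i)) (\<lambda>i. z' (Inr i)) $ r $ s"
        and a: "(k, x) \<in> dom_pts \<alpha>" "(k', x') \<in> dom_pts \<alpha>" "samecell p \<alpha> k x k' x'"
      have "A \<alpha> (\<lambda>i. case_sum k x (Inl i)) (\<lambda>i. case_sum k x (Inr i)) $ r $ s =
            A \<alpha> (\<lambda>i. case_sum k' x' (Inl i)) (\<lambda>i. case_sum k' x' (Inr i)) $ r $ s"
      proof -
        have e1: "(\<lambda>i. case_sum k x (Inl i)) = k" "(\<lambda>i. case_sum k x (Inr i)) = x"
             "(\<lambda>i. case_sum k' x' (Inl i)) = k'" "(\<lambda>i. case_sum k' x' (Inr i)) = x'" by auto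
        have "\<forall>i\<in>UNIV <+> \<alpha>. cidx p (case_sum k x i) = cidx p (case_sum k' x' i)"
          using c[of "case_sum k x" "case_sum k' x'"] a(3) unfolding e1 by blast
        then show ?thesis using H join_dom[OF a(1)] join_dom[OF a(2)] by blast
      qed
      then show "A \<alpha> k x $ r $ s = A \<alpha> k' x' $ r $ s" by (simp add: eta_contract_eq)
    next
      assume H: "\<forall>k x k' x'. (k, x) \<in> dom_pts \<alpha> \<longrightarrow> (k', x') \<in> dom_pts \<alpha> \<longrightarrow> samecell p \<alpha> k x k' x' \<longrightarrow> A \<alpha> k x $ r $ s = A \<alpha> k' x' $ r $ s"
      show "\<forall>z\<in>(UNIV <+> \<alpha>) \<rightarrow>\<^sub>E {0..<1}. \<forall>z'\<in>(UNIV <+> \<alpha>) \<rightarrow>\<^sub>E {0..<1}. (\<forall>i\<in>UNIV <+> \<alpha>. cidx p (z i) = cidx p (z' i)) \<longrightarrow>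
         A \<alpha> (\<lambda>i. z (Inl i)) (\<lambda>i. z (Inr i)) $ r $ s = A \<alpha> (\<lambda>i. z' (Inl i)) (\<lambda>i. z' (Inr i)) $ r $ s"
        using H split_dom c by blast
    qed
  qed
  then show ?thesis
    unfolding is_coeffs_def cc_def by (auto simp: vec_eq_iff)
qed

lemma dom_pts_ne: "((\<lambda>_. 0), (\<lambda>i\<in>\<alpha>. 0)) \<in> dom_pts \<alpha>"
  unfolding dom_pts_def by auto

lemma finite_vals:
  fixes g :: "('n::finite \<Rightarrow> real) \<Rightarrow> ('n \<Rightarrow> real) \<Rightarrow> 'b"
  assumes p: "p > 0" and g: "cc p \<alpha> g"
  shows "finite {g k x | k x. (k, x) \<in> dom_pts \<alpha>}"
proof -
  let ?F = "\<lambda>(K, L). g (\<lambda>i. rep p (K i)) (\<lambda>i\<in>\<alpha>. rep p (L i))"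
  have "{g k x | k x. (k, x) \<in> dom_pts \<alpha>} \<subseteq> ?F ` ((UNIV \<rightarrow>\<^sub>E {..<p}) \<times> (\<alpha> \<rightarrow>\<^sub>E {..<p}))"
  proof safe
    fix k x assume kx: "(k, x) \<in> dom_pts \<alpha>"
    define K where "K = (\<lambda>i. cidx p (k i))"
    define L where "L = (\<lambda>i\<in>\<alpha>. cidx p (x i))"
    have K: "K \<in> UNIV \<rightarrow>\<^sub>E {..<p}" using kx p cidx_lt unfolding K_def dom_pts_def by (auto simp: PiE_def Pi_def)
    have L: "L \<in> \<alpha> \<rightarrow>\<^sub>E {..<p}" using kx p cidx_lt unfolding L_def dom_pts_def by (auto simp: PiE_def Pi_def)
    have d2: "((\<lambda>i. rep p (K i)), (\<lambda>i\<in>\<alpha>. rep p (L i))) \<in> dom_pts \<alpha>"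
      using K L rep_in unfolding dom_pts_def by (auto simp: PiE_def Pi_def)
    have sc: "samecell p \<alpha> k x (\<lambda>i. rep p (K i)) (\<lambda>i\<in>\<alpha>. rep p (L i))"
      unfolding samecell_def K_def L_def using p by (simp add: cidx_rep)
    have "g k x = ?F (K, L)" using g kx d2 sc unfolding cc_def by auto
    then show "g k x \<in> ?F ` ((UNIV \<rightarrow>\<^sub>E {..<p}) \<times> (\<alpha> \<rightarrow>\<^sub>E {..<p}))" using K L by blast
  qed
  moreover have "finite (((UNIV::'n set) \<rightarrow>\<^sub>E {..<p}) \<times> (\<alpha> \<rightarrow>\<^sub>E {..<p}))"
    by (intro finite_cartesian_product finite_PiE) auto
  ultimately show ?thesis by (meson finite_imageI finite_subset)
qed

definition rsum :: "('n, 'm::finite) coeffs \<Rightarrow> 'n set \<Rightarrow> ('n \<Rightarrow> real) \<Rightarrow> ('n \<Rightarrow> real) \<Rightarrow> 'm \<Rightarrow> real" where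
  "rsum A \<alpha> k x i = (\<Sum>j\<in>UNIV. norm (A \<alpha> k x $ i $ j))"

definition RS :: "('n, 'm::finite) coeffs \<Rightarrow> 'n set \<Rightarrow> real set" where
  "RS A \<alpha> = {(\<Sum>j\<in>UNIV. norm (A \<alpha> k x $ i $ j)) | k x i. (k, x) \<in> dom_pts \<alpha>}"

definition mx :: "('n, 'm::finite) coeffs \<Rightarrow> 'n set \<Rightarrow> real" where
  "mx A \<alpha> = Max (RS A \<alpha>)"

lemma normL_mx: "normL A = (\<Sum>\<alpha>\<in>UNIV. mx A \<alpha>)"
  unfolding normL_def mx_def RS_def ..

lemma RS_finite:
  fixes A :: "('n::finite, 'm::finite) coeffs"
  assumes p: "p > 0" and A: "\<forall>\<alpha>. cc p \<alpha> (A \<alpha>)"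
  shows "finite (RS A \<alpha>)"
proof -
  have "RS A \<alpha> = (\<lambda>(M, i). \<Sum>j\<in>UNIV. norm (M $ i $ j)) ` ({A \<alpha> k x | k x. (k, x) \<in> dom_pts \<alpha>} \<times> UNIV)"
    unfolding RS_def by force
  then show ?thesis using finite_vals[OF p A[rule_format]] by (simp del: Collect_ex_eq)
qed

lemma RS_ne: "RS A \<alpha> \<noteq> {}"
  unfolding RS_def using dom_pts_ne by blast

lemma mx_ge:
  fixes A :: "('n::finite, 'm::finite) coeffs"
  assumes p: "p > 0" and A: "\<forall>\<alpha>. cc p \<alpha> (A \<alpha>)" and kx: "(k, x) \<in> dom_pts \<alpha>"
  shows "rsum A \<alpha> k x i \<le> mx A \<alpha>"
  unfolding mx_def rsum_def using RS_finite[OF p A] kx by (intro Max_ge) (auto simp: RS_def)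

lemma mx_le:
  fixes A :: "('n::finite, 'm::finite) coeffs"
  assumes p: "p > 0" and A: "\<forall>\<alpha>. cc p \<alpha> (A \<alpha>)"
    and H: "\<And>k x i. (k, x) \<in> dom_pts \<alpha> \<Longrightarrow> rsum A \<alpha> k x i \<le> c"
  shows "mx A \<alpha> \<le> c"
  unfolding mx_def using RS_finite[OF p A] RS_ne H by (subst Max_le_iff) (auto simp: RS_def rsum_def)

lemma mx_attained:
  fixes A :: "('n::finite, 'm::finite) coeffs"
  assumes p: "p > 0" and A: "\<forall>\<alpha>. cc p \<alpha> (A \<alpha>)"
  obtains k x i where "(k, x) \<in> dom_pts \<alpha>" "mx A \<alpha> = rsum A \<alpha> k x i"
proof -
  have "mx A \<alpha> \<in> RS A \<alpha>" unfolding mx_def using RS_finite[OF p A] RS_ne by (rule Max_in)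
  then show ?thesis using that unfolding RS_def rsum_def by blast
qed

lemma rsum_nonneg: "rsum A \<alpha> k x i \<ge> 0"
  unfolding rsum_def by (simp add: sum_nonneg)

lemma mx_nonneg:
  fixes A :: "('n::finite, 'm::finite) coeffs"
  assumes p: "p > 0" and A: "\<forall>\<alpha>. cc p \<alpha> (A \<alpha>)"
  shows "mx A \<alpha> \<ge> 0"
  using mx_ge[OF p A dom_pts_ne] rsum_nonneg by (meson order_trans)

lemma normL_nonneg:
  fixes A :: "('n::finite, 'm::finite) coeffs"
  assumes p: "p > 0" and A: "\<forall>\<alpha>. cc p \<alpha> (A \<alpha>)"
  shows "normL A \<ge> 0"
  unfolding normL_mx using mx_nonneg[OF p A] by (meson sum_nonneg)

lemma cc_add: "cc p \<alpha> f \<Longrightarrow> cc p \<alpha> g \<Longrightarrow> cc p \<alpha> (\<lambda>k x. f k x + g k x)"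
  unfolding cc_def by metis

lemma cc_diff: "cc p \<alpha> f \<Longrightarrow> cc p \<alpha> g \<Longrightarrow> cc p \<alpha> (\<lambda>k x. f k x - g k x)"
  unfolding cc_def by metis

lemma cc_scale: "cc p \<alpha> f \<Longrightarrow> cc p \<alpha> (\<lambda>k x. (\<chi> i j. c * (f k x $ i $ j)))"
  unfolding cc_def by metis

lemma part_add:
  fixes A B :: "('n::finite, 'm::finite) coeffs"
  assumes p: "p > 0" and A: "is_coeffs p A" and B: "is_coeffs p B"
  shows "is_coeffs p (addL A B) \<and> normL (addL A B) \<le> normL A + normL B"
proof -
  have cA: "\<forall>\<alpha>. cc p \<alpha> (A \<alpha>)" and cB: "\<forall>\<alpha>. cc p \<alpha> (B \<alpha>)" using A B is_coeffs_iff[OF p] by auto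
  have cAB: "\<forall>\<alpha>. cc p \<alpha> (addL A B \<alpha>)" using cA cB cc_add unfolding addL_def by blast
  have "mx (addL A B) \<alpha> \<le> mx A \<alpha> + mx B \<alpha>" for \<alpha>
  proof (rule mx_le[OF p cAB])
    fix k x i assume kx: "(k, x) \<in> dom_pts \<alpha>"
    have "rsum (addL A B) \<alpha> k x i \<le> rsum A \<alpha> k x i + rsum B \<alpha> k x i"
      unfolding rsum_def addL_def sum.distrib[symmetric] by (intro sum_mono) (simp add: norm_triangle_ineq)
    also have "\<dots> \<le> mx A \<alpha> + mx B \<alpha>" using mx_ge[OF p cA kx] mx_ge[OF p cB kx] by (meson add_mono)
    finally show "rsum (addL A B) \<alpha> k x i \<le> mx A \<alpha> + mx B \<alpha>" .
  qed
  then have "normL (addL A B) \<le> normL A + normL B"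
    unfolding normL_mx sum.distrib[symmetric] by (intro sum_mono) auto
  then show ?thesis using cAB is_coeffs_iff[OF p] by blast
qed

lemma part_scale:
  fixes A :: "('n::finite, 'm::finite) coeffs"
  assumes p: "p > 0" and A: "is_coeffs p A"
  shows "is_coeffs p (scaleL c A) \<and> normL (scaleL c A) = norm c * normL A"
proof -
  have cA: "\<forall>\<alpha>. cc p \<alpha> (A \<alpha>)" using A is_coeffs_iff[OF p] by auto
  have cS: "\<forall>\<alpha>. cc p \<alpha> (scaleL c A \<alpha>)" using cA cc_scale unfolding scaleL_def by blast
  have rs: "rsum (scaleL c A) \<alpha> k x i = norm c * rsum A \<alpha> k x i" for \<alpha> k x i
    unfolding rsum_def scaleL_def by (simp add: norm_mult sum_distrib_left)
  have "mx (scaleL c A) \<alpha> = norm c * mx A \<alpha>" for \<alpha>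
  proof (rule antisym)
    show "mx (scaleL c A) \<alpha> \<le> norm c * mx A \<alpha>"
      using mx_ge[OF p cA] by (intro mx_le[OF p cS]) (auto simp: rs intro!: mult_left_mono)
    obtain k x i where kx: "(k, x) \<in> dom_pts \<alpha>" "mx A \<alpha> = rsum A \<alpha> k x i"
      using mx_attained[OF p cA] by blast
    show "norm c * mx A \<alpha> \<le> mx (scaleL c A) \<alpha>"
      using mx_ge[OF p cS kx(1), of i] kx(2) rs by simp
  qed
  then have "normL (scaleL c A) = norm c * normL A"
    unfolding normL_mx sum_distrib_left by simp
  then show ?thesis using cS is_coeffs_iff[OF p] by blast
qed

lemma entry_le_norm: "norm (M $ i $ j) \<le> norm (M :: complex^'m::finite^'m)"
  using Finite_Cartesian_Product.norm_nth_le[of "M $ i" j] Finite_Cartesian_Product.norm_nth_le[of M i] by linarith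

lemma norm_le_entries: "norm (M :: complex^'m::finite^'m) \<le> (\<Sum>i\<in>UNIV. \<Sum>j\<in>UNIV. norm (M $ i $ j))"
proof -
  have l1: "norm (v :: complex^'m) \<le> (\<Sum>i\<in>UNIV. norm (v $ i))" for v
    unfolding norm_vec_def by (rule L2_set_le_sum) auto
  have l2: "norm (v :: complex^'m^'m) \<le> (\<Sum>i\<in>UNIV. norm (v $ i))" for v
    unfolding norm_vec_def by (rule L2_set_le_sum) auto
  have "norm M \<le> (\<Sum>i\<in>UNIV. norm (M $ i))" by (rule l2)
  also have "\<dots> \<le> (\<Sum>i\<in>UNIV. \<Sum>j\<in>UNIV. norm (M $ i $ j))" by (intro sum_mono l1)
  finally show ?thesis .
qed

lemma norm_le_mx:
  fixes A :: "('n::finite, 'm::finite) coeffs"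
  assumes p: "p > 0" and A: "\<forall>\<alpha>. cc p \<alpha> (A \<alpha>)" and kx: "(k, x) \<in> dom_pts \<alpha>"
  shows "norm (A \<alpha> k x) \<le> real CARD('m) * mx A \<alpha>"
proof -
  have "norm (A \<alpha> k x) \<le> (\<Sum>i\<in>UNIV. rsum A \<alpha> k x i)" unfolding rsum_def by (rule norm_le_entries)
  also have "\<dots> \<le> (\<Sum>i\<in>(UNIV::'m set). mx A \<alpha>)" by (intro sum_mono mx_ge[OF p A kx])
  finally show ?thesis by simp
qed

lemma mx_le_norm:
  fixes A :: "('n::finite, 'm::finite) coeffs"
  assumes p: "p > 0" and A: "\<forall>\<alpha>. cc p \<alpha> (A \<alpha>)"
    and H: "\<And>k x. (k, x) \<in> dom_pts \<alpha> \<Longrightarrow> norm (A \<alpha> k x) \<le> c"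
  shows "mx A \<alpha> \<le> real CARD('m) * c"
proof (rule mx_le[OF p A])
  fix k x i assume kx: "(k, x) \<in> dom_pts \<alpha>"
  have "rsum A \<alpha> k x i \<le> (\<Sum>j\<in>(UNIV::'m set). c)" unfolding rsum_def
    by (intro sum_mono order_trans[OF entry_le_norm H[OF kx]])
  then show "rsum A \<alpha> k x i \<le> real CARD('m) * c" by simp
qed

lemma mx_le_normL:
  fixes A :: "('n::finite, 'm::finite) coeffs"
  assumes p: "p > 0" and A: "\<forall>\<alpha>. cc p \<alpha> (A \<alpha>)"
  shows "mx A \<alpha> \<le> normL A"
  unfolding normL_mx using member_le_sum[of \<alpha> UNIV "mx A"] mx_nonneg[OF p A] by auto

lemma cc_diffL: "\<forall>\<alpha>. cc p \<alpha> (A \<alpha>) \<Longrightarrow> \<forall>\<alpha>. cc p \<alpha> (B \<alpha>) \<Longrightarrow> \<forall>\<alpha>. cc p \<alpha> (diffL A B \<alpha>)"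
  unfolding diffL_def using cc_diff by blast

lemma part_conv:
  fixes S :: "nat \<Rightarrow> ('n::finite, 'm::finite) coeffs" and A :: "('n, 'm) coeffs"
  assumes p: "p > 0" and S: "\<forall>n. \<forall>\<alpha>. cc p \<alpha> (S n \<alpha>)" and A: "\<forall>\<alpha>. cc p \<alpha> (A \<alpha>)"
  shows "(\<lambda>n. normL (diffL (S n) A)) \<longlonglongrightarrow> 0 \<longleftrightarrow>
         (\<forall>\<alpha>. uniform_limit (dom_pts \<alpha>) (\<lambda>n (k, x). S n \<alpha> k x) (\<lambda>(k, x). A \<alpha> k x) sequentially)"
proof -
  have D: "\<forall>\<alpha>. cc p \<alpha> (diffL (S n) A \<alpha>)" for n using cc_diffL S A by blast
  let ?C = "real CARD('m)"
  have Cpos: "?C > 0" by simp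
  show ?thesis
  proof
    assume L: "(\<lambda>n. normL (diffL (S n) A)) \<longlonglongrightarrow> 0"
    show "\<forall>\<alpha>. uniform_limit (dom_pts \<alpha>) (\<lambda>n (k, x). S n \<alpha> k x) (\<lambda>(k, x). A \<alpha> k x) sequentially"
    proof (intro allI, unfold uniform_limit_iff, intro allI impI)
      fix \<alpha> :: "'n set" and e :: real assume e: "e > 0"
      have "e / (?C + 1) > 0" using e by simp
      then have ev: "eventually (\<lambda>n. normL (diffL (S n) A) < e / (?C + 1)) sequentially"
        using order_tendstoD(2)[OF L] by blast
      show "eventually (\<lambda>n. \<forall>kx\<in>dom_pts \<alpha>. dist ((\<lambda>(k, x). S n \<alpha> k x) kx) ((\<lambda>(k, x). A \<alpha> k x) kx) < e) sequentially"
      proof (rule eventually_mono[OF ev], intro ballI)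
        fix n kx assume n: "normL (diffL (S n) A) < e / (?C + 1)" and kx0: "kx \<in> dom_pts \<alpha>"
        obtain k x where kxe: "kx = (k, x)" by fastforce
        have kx: "(k, x) \<in> dom_pts \<alpha>" using kx0 kxe by simp
        have "dist (S n \<alpha> k x) (A \<alpha> k x) = norm (diffL (S n) A \<alpha> k x)"
          by (simp add: dist_norm diffL_def)
        also have "\<dots> \<le> ?C * mx (diffL (S n) A) \<alpha>" by (rule norm_le_mx[OF p D kx])
        also have "\<dots> \<le> ?C * normL (diffL (S n) A)" by (intro mult_left_mono mx_le_normL[OF p D]) auto
        also have "\<dots> \<le> ?C * (e / (?C + 1))" using n by (intro mult_left_mono) auto
        also have "\<dots> < e" using e by (simp add: field_simps)
        finally show "dist ((\<lambda>(k, x). S n \<alpha> k x) kx) ((\<lambda>(k, x). A \<alpha> k x) kx) < e" by (simp add: kxe)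
      qed
    qed
  next
    assume U: "\<forall>\<alpha>. uniform_limit (dom_pts \<alpha>) (\<lambda>n (k, x). S n \<alpha> k x) (\<lambda>(k, x). A \<alpha> k x) sequentially"
    have "(\<lambda>n. mx (diffL (S n) A) \<alpha>) \<longlonglongrightarrow> 0" for \<alpha>
    proof (rule tendstoI)
      fix e :: real assume e: "e > 0"
      have "e / (?C + 1) > 0" using e by simp
      then have ev: "eventually (\<lambda>n. \<forall>kx\<in>dom_pts \<alpha>. dist ((\<lambda>(k, x). S n \<alpha> k x) kx) ((\<lambda>(k, x). A \<alpha> k x) kx) < e / (?C + 1)) sequentially"
        using U unfolding uniform_limit_iff by blast
      show "eventually (\<lambda>n. dist (mx (diffL (S n) A) \<alpha>) 0 < e) sequentially"
      proof (rule eventually_mono[OF ev])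
        fix n assume n: "\<forall>kx\<in>dom_pts \<alpha>. dist ((\<lambda>(k, x). S n \<alpha> k x) kx) ((\<lambda>(k, x). A \<alpha> k x) kx) < e / (?C + 1)"
        have "mx (diffL (S n) A) \<alpha> \<le> ?C * (e / (?C + 1))"
        proof (rule mx_le_norm[OF p D])
          fix k x assume "(k, x) \<in> dom_pts \<alpha>"
          then have "dist ((\<lambda>(k, x). S n \<alpha> k x) (k, x)) ((\<lambda>(k, x). A \<alpha> k x) (k, x)) < e / (?C + 1)"
            using n by blast
          then show "norm (diffL (S n) A \<alpha> k x) \<le> e / (?C + 1)"
            by (simp add: dist_norm diffL_def)
        qed
        also have "\<dots> < e" using e by (simp add: field_simps)
        finally show "dist (mx (diffL (S n) A) \<alpha>) 0 < e"
          using mx_nonneg[OF p D] by simp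
      qed
    qed
    then have "(\<lambda>n. \<Sum>\<alpha>\<in>UNIV. mx (diffL (S n) A) \<alpha>) \<longlonglongrightarrow> (\<Sum>\<alpha>\<in>(UNIV::'n set set). 0)"
      by (intro tendsto_sum) auto
    then show "(\<lambda>n. normL (diffL (S n) A)) \<longlonglongrightarrow> 0" unfolding normL_mx by simp
  qed
qed

lemma part_complete:
  fixes S :: "nat \<Rightarrow> ('n::finite, 'm::finite) coeffs"
  assumes p: "p > 0" and S: "\<forall>n. is_coeffs p (S n)"
    and Ca: "\<forall>e>0. \<exists>n0. \<forall>m\<ge>n0. \<forall>n\<ge>n0. normL (diffL (S m) (S n)) < e"
  shows "\<exists>A. is_coeffs p A \<and> (\<lambda>n. normL (diffL (S n) A)) \<longlonglongrightarrow> 0"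
proof -
  have cS: "\<forall>n. \<forall>\<alpha>. cc p \<alpha> (S n \<alpha>)" using S is_coeffs_iff[OF p] by blast
  let ?C = "real CARD('m)"
  have UC: "uniformly_Cauchy_on (dom_pts \<alpha>) (\<lambda>n (k, x). S n \<alpha> k x)" for \<alpha>
    unfolding uniformly_Cauchy_on_def
  proof (intro allI impI)
    fix e :: real assume e: "e > 0"
    have "e / (?C + 1) > 0" using e by simp
    then obtain n0 where n0: "\<forall>m\<ge>n0. \<forall>n\<ge>n0. normL (diffL (S m) (S n)) < e / (?C + 1)"
      using Ca by blast
    show "\<exists>M. \<forall>kx\<in>dom_pts \<alpha>. \<forall>m\<ge>M. \<forall>n\<ge>M. dist ((\<lambda>(k, x). S m \<alpha> k x) kx) ((\<lambda>(k, x). S n \<alpha> k x) kx) < e"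
    proof (intro exI ballI allI impI)
      fix kx m n assume kx: "kx \<in> dom_pts \<alpha>" and mn: "n0 \<le> m" "n0 \<le> n"
      obtain k x where kxe: "kx = (k, x)" by fastforce
      have D: "\<forall>\<alpha>. cc p \<alpha> (diffL (S m) (S n) \<alpha>)" using cc_diffL cS by blast
      have "dist (S m \<alpha> k x) (S n \<alpha> k x) = norm (diffL (S m) (S n) \<alpha> k x)"
        by (simp add: dist_norm diffL_def)
      also have "\<dots> \<le> ?C * mx (diffL (S m) (S n)) \<alpha>" by (rule norm_le_mx[OF p D kx[unfolded kxe]])
      also have "\<dots> \<le> ?C * normL (diffL (S m) (S n))" by (intro mult_left_mono mx_le_normL[OF p D]) auto
      also have "\<dots> \<le> ?C * (e / (?C + 1))" using n0 mn by (intro mult_left_mono) (auto simp: less_imp_le)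
      also have "\<dots> < e" using e by (simp add: field_simps)
      finally show "dist ((\<lambda>(k, x). S m \<alpha> k x) kx) ((\<lambda>(k, x). S n \<alpha> k x) kx) < e" by (simp add: kxe)
    qed
  qed
  have "\<exists>g. uniform_limit (dom_pts \<alpha>) (\<lambda>n (k, x). S n \<alpha> k x) g sequentially" for \<alpha> :: "'n set"
    using Cauchy_uniformly_convergent[OF UC] unfolding uniformly_convergent_on_def by blast
  then have "\<forall>\<alpha>. \<exists>g. uniform_limit (dom_pts \<alpha>) (\<lambda>n (k, x). S n \<alpha> k x) g sequentially" by blast
  from choice[OF this] obtain g where g: "\<And>\<alpha>. uniform_limit (dom_pts \<alpha>) (\<lambda>n (k, x). S n \<alpha> k x) (g \<alpha>) sequentially"
    by blast
  define A :: "('n, 'm) coeffs" where "A = (\<lambda>\<alpha> k x. g \<alpha> (k, x))"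
  have gA: "g \<alpha> = (\<lambda>(k, x). A \<alpha> k x)" for \<alpha> unfolding A_def by auto
  have pt: "(\<lambda>n. S n \<alpha> k x) \<longlonglongrightarrow> A \<alpha> k x" if "(k, x) \<in> dom_pts \<alpha>" for \<alpha> k x
    using tendsto_uniform_limitI[OF g that] unfolding A_def by simp
  have cA: "\<forall>\<alpha>. cc p \<alpha> (A \<alpha>)"
    unfolding cc_def
  proof (intro allI impI)
    fix \<alpha> :: "'n set" and k x k' x' assume a: "(k, x) \<in> dom_pts \<alpha>" "(k', x') \<in> dom_pts \<alpha>" "samecell p \<alpha> k x k' x'"
    have "S n \<alpha> k x = S n \<alpha> k' x'" for n using cS a unfolding cc_def by blast
    then have eq: "(\<lambda>n. S n \<alpha> k x) = (\<lambda>n. S n \<alpha> k' x')" by simp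
    have "(\<lambda>n. S n \<alpha> k x) \<longlonglongrightarrow> A \<alpha> k' x'" using pt[OF a(2)] unfolding eq .
    then show "A \<alpha> k x = A \<alpha> k' x'" using pt[OF a(1)] LIMSEQ_unique by blast
  qed
  have "(\<lambda>n. normL (diffL (S n) A)) \<longlonglongrightarrow> 0"
    using part_conv[OF p cS cA] g gA by simp
  then show ?thesis using cA is_coeffs_iff[OF p] by blast
qed

lemma unitI_prob: "prob_space unitI"
proof (rule prob_spaceI)
  have "space unitI = {0..<1::real}" unfolding unitI_def by (simp add: space_restrict_space)
  then show "emeasure unitI (space unitI) = 1"
    unfolding unitI_def by (simp add: emeasure_restrict_space)
qed

lemma space_unitI: "space unitI = {0..<1}"
  unfolding unitI_def by (simp add: space_restrict_space)

lemma psf: "product_sigma_finite (\<lambda>_. unitI)"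
  unfolding product_sigma_finite_def using unitI_prob prob_space_imp_sigma_finite by blast

lemma cube_prob: "prob_space (cube \<alpha>)"
  unfolding cube_def by (rule prob_space_PiM) (rule unitI_prob)

lemma space_cube: "space (cube \<alpha>) = \<alpha> \<rightarrow>\<^sub>E {0..<1}"
  unfolding cube_def by (simp add: space_PiM space_unitI)

lemma sets_cube_UNIV_pair: "sets (cube UNIV \<Otimes>\<^sub>M cube \<alpha>) = sets (cube UNIV \<Otimes>\<^sub>M cube \<alpha>)" ..

lemma measurable_merge_pt:
  "(\<lambda>kx. merge_pt \<alpha> (fst kx) (snd kx)) \<in> measurable (cube UNIV \<Otimes>\<^sub>M cube \<alpha>) (cube UNIV)"
  unfolding cube_def
proof (rule measurable_PiM_single')
  fix i :: 'a assume "i \<in> UNIV"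
  show "(\<lambda>kx. merge_pt \<alpha> (fst kx) (snd kx) i) \<in> measurable (Pi\<^sub>M UNIV (\<lambda>_. unitI) \<Otimes>\<^sub>M Pi\<^sub>M \<alpha> (\<lambda>_. unitI)) unitI"
  proof (cases "i \<in> \<alpha>")
    case True
    then show ?thesis unfolding merge_pt_def by simp
  next
    case False
    then show ?thesis unfolding merge_pt_def by simp
  qed
next
  show "(\<lambda>kx. merge_pt \<alpha> (fst kx) (snd kx)) \<in> space (Pi\<^sub>M UNIV (\<lambda>_. unitI) \<Otimes>\<^sub>M Pi\<^sub>M \<alpha> (\<lambda>_. unitI)) \<rightarrow> UNIV \<rightarrow>\<^sub>E space unitI"
    by (auto simp: space_pair_measure space_PiM merge_pt_def PiE_def Pi_def)
qed

lemma merge_pt_merge: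
  "merge_pt \<alpha> (merge (- \<alpha>) \<alpha> (a, b)) x = merge (- \<alpha>) \<alpha> (a, x)"
  unfolding merge_pt_def merge_def by auto

lemma cube_UNIV_split: "cube (UNIV :: 'n set) = PiM (- \<alpha> \<union> \<alpha>) (\<lambda>_. unitI)"
  unfolding cube_def by (simp add: Un_commute)

lemma KM:
  fixes f :: "('n::finite \<Rightarrow> real) \<Rightarrow> ennreal"
  assumes f[measurable]: "f \<in> borel_measurable (cube UNIV)"
  shows "(\<integral>\<^sup>+k. (\<integral>\<^sup>+x. f (merge_pt \<alpha> k x) \<partial>cube \<alpha>) \<partial>cube UNIV) = (\<integral>\<^sup>+k. f k \<partial>cube UNIV)"
proof -
  interpret P: product_sigma_finite "\<lambda>_. unitI" by (rule psf)
  interpret Ca: prob_space "cube \<alpha>" by (rule cube_prob)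
  have dj: "- \<alpha> \<inter> \<alpha> = {}" "finite (- \<alpha>)" "finite \<alpha>" by auto
  have mm: "(\<lambda>kx. merge_pt \<alpha> (fst kx) (snd kx)) \<in> measurable (cube UNIV \<Otimes>\<^sub>M cube \<alpha>) (cube UNIV)"
    by (rule measurable_merge_pt)
  have fm: "(\<lambda>kx. f (merge_pt \<alpha> (fst kx) (snd kx))) \<in> borel_measurable (cube UNIV \<Otimes>\<^sub>M cube \<alpha>)"
    using measurable_comp[OF mm f] by (simp add: comp_def)
  have Gm: "(\<lambda>k. \<integral>\<^sup>+x. f (merge_pt \<alpha> k x) \<partial>cube \<alpha>) \<in> borel_measurable (cube UNIV)"
    using Ca.borel_measurable_nn_integral[of "\<lambda>k x. f (merge_pt \<alpha> k x)" "cube UNIV"] fm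
    by (simp add: split_beta')
  have fm2: "f \<in> borel_measurable (PiM (- \<alpha> \<union> \<alpha>) (\<lambda>_. unitI))"
    using f cube_UNIV_split[of \<alpha>] by simp
  have Gm2: "(\<lambda>k. \<integral>\<^sup>+x. f (merge_pt \<alpha> k x) \<partial>cube \<alpha>) \<in> borel_measurable (PiM (- \<alpha> \<union> \<alpha>) (\<lambda>_. unitI))"
    using Gm cube_UNIV_split[of \<alpha>] by simp
  have "(\<integral>\<^sup>+k. (\<integral>\<^sup>+x. f (merge_pt \<alpha> k x) \<partial>cube \<alpha>) \<partial>cube UNIV)
      = (\<integral>\<^sup>+a. (\<integral>\<^sup>+b. (\<integral>\<^sup>+x. f (merge_pt \<alpha> (merge (- \<alpha>) \<alpha> (a, b)) x) \<partial>cube \<alpha>) \<partial>cube \<alpha>) \<partial>cube (- \<alpha>))"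
    unfolding cube_UNIV_split[of \<alpha>] P.product_nn_integral_fold[OF dj Gm2]
    unfolding cube_def ..
  also have "\<dots> = (\<integral>\<^sup>+a. (\<integral>\<^sup>+b. (\<integral>\<^sup>+x. f (merge (- \<alpha>) \<alpha> (a, x)) \<partial>cube \<alpha>) \<partial>cube \<alpha>) \<partial>cube (- \<alpha>))"
    unfolding merge_pt_merge ..
  also have "\<dots> = (\<integral>\<^sup>+a. (\<integral>\<^sup>+x. f (merge (- \<alpha>) \<alpha> (a, x)) \<partial>cube \<alpha>) \<partial>cube (- \<alpha>))"
    by (simp add: Ca.emeasure_space_1)
  also have "\<dots> = (\<integral>\<^sup>+k. f k \<partial>cube UNIV)"
    unfolding cube_UNIV_split[of \<alpha>] P.product_nn_integral_fold[OF dj fm2]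
    unfolding cube_def ..
  finally show ?thesis .
qed

lemma pred_cidx:
  assumes p: "p > 0"
  shows "Measurable.pred unitI (\<lambda>y. cidx p y = K)"
proof -
  have "{y \<in> space unitI. cidx p y = K} = {real K / real p ..< (real K + 1) / real p} \<inter> {0..<1}"
  proof -
    have eqc: "cidx p y = K \<longleftrightarrow> y \<in> {real K / real p ..< (real K + 1) / real p}" if "0 \<le> y" for y
      using chi_cidx[OF p that, of K] unfolding chi_def by (auto simp: indicator_def split: if_splits)
    show ?thesis
    proof (intro set_eqI)
      fix y
      show "y \<in> {y \<in> space unitI. cidx p y = K} \<longleftrightarrow> y \<in> {real K / real p ..< (real K + 1) / real p} \<inter> {0..<1}"
      proof (cases "0 \<le> y")
        case True
        then show ?thesis using eqc[OF True] by (auto simp: space_unitI)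
      next
        case False
        have "real K / real p \<ge> 0" by simp
        then show ?thesis using False by (auto simp: space_unitI simp del: divide_nonneg_nonneg zero_le_divide_iff; linarith)
      qed
    qed
  qed
  moreover have "{real K / real p ..< (real K + 1) / real p} \<inter> {0..<1} \<in> sets unitI"
    unfolding unitI_def by (subst sets_restrict_space_iff) auto
  ultimately show ?thesis unfolding pred_def by simp
qed

lemma coeff_meas:
  fixes A :: "('n::finite, 'm::finite) coeffs"
  assumes p: "p > 0" and A: "cc p \<alpha> (A \<alpha>)"
  shows "(\<lambda>kx. A \<alpha> (fst kx) (snd kx)) \<in> borel_measurable (cube UNIV \<Otimes>\<^sub>M cube \<alpha>)"
proof -
  let ?M = "cube UNIV \<Otimes>\<^sub>M cube \<alpha>"
  define I where "I = ((UNIV::'n set) \<rightarrow>\<^sub>E {..<p}) \<times> (\<alpha> \<rightarrow>\<^sub>E {..<p})"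
  define g where "g kx = ((\<lambda>i. cidx p (fst kx i)), (\<lambda>i\<in>\<alpha>. cidx p (snd kx i)))" for kx :: "('n \<Rightarrow> real) \<times> ('n \<Rightarrow> real)"
  define f where "f KL kx = A \<alpha> (\<lambda>i. rep p (fst KL i)) (\<lambda>i\<in>\<alpha>. rep p (snd KL i))"
    for KL :: "('n \<Rightarrow> nat) \<times> ('n \<Rightarrow> nat)" and kx :: "('n \<Rightarrow> real) \<times> ('n \<Rightarrow> real)"
  have cI: "countable I" unfolding I_def by (intro countable_finite finite_cartesian_product finite_PiE) auto
  have sp: "space ?M = dom_pts \<alpha>" unfolding dom_pts_def by (simp add: space_pair_measure space_cube)
  have pc1: "Measurable.pred ?M (\<lambda>kx. cidx p (fst kx i) = c)" for i c
  proof -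
    have "(\<lambda>kx. fst kx i) \<in> measurable ?M unitI" unfolding cube_def by simp
    then show ?thesis using measurable_compose[OF _ pred_cidx[OF p]] by blast
  qed
  have pc2: "Measurable.pred ?M (\<lambda>kx. cidx p (snd kx i) = c)" if "i \<in> \<alpha>" for i c
  proof -
    have "(\<lambda>kx. snd kx i) \<in> measurable ?M unitI" unfolding cube_def using that by simp
    then show ?thesis using measurable_compose[OF _ pred_cidx[OF p]] by blast
  qed
  have gm: "g \<in> measurable ?M (count_space I)"
    unfolding measurable_count_space_eq_countable[OF cI]
  proof safe
    fix kx :: "('n \<Rightarrow> real) \<times> ('n \<Rightarrow> real)" assume "kx \<in> space ?M"
    then show "g kx \<in> I" unfolding sp dom_pts_def g_def I_def using cidx_lt[OF p]
      by (auto simp: PiE_def Pi_def)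
  next
    fix K L assume KL: "(K, L) \<in> I"
    have "g -` {(K, L)} \<inter> space ?M = {kx \<in> space ?M. (\<forall>i\<in>UNIV. cidx p (fst kx i) = K i) \<and> (\<forall>i\<in>\<alpha>. cidx p (snd kx i) = L i)}"
      using KL unfolding g_def I_def by (auto simp: PiE_def extensional_def fun_eq_iff)
    also have "\<dots> \<in> sets ?M"
    proof -
      have "Measurable.pred ?M (\<lambda>kx. (\<forall>i\<in>UNIV. cidx p (fst kx i) = K i) \<and> (\<forall>i\<in>\<alpha>. cidx p (snd kx i) = L i))"
        using pc1 pc2 by (intro pred_intros_logic pred_intros_finite) auto
      then show ?thesis unfolding pred_def by simp
    qed
    finally show "g -` {(K, L)} \<inter> space ?M \<in> sets ?M" .
  qed
  have fg: "(\<lambda>kx. f (g kx) kx) \<in> borel_measurable ?M"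
    by (rule measurable_compose_countable'[OF _ gm cI]) (simp add: f_def)
  show ?thesis
  proof (rule measurable_cong[THEN iffD1, OF _ fg])
    fix kx :: "('n \<Rightarrow> real) \<times> ('n \<Rightarrow> real)" assume kx: "kx \<in> space ?M"
    obtain k x where kxe: "kx = (k, x)" by fastforce
    have d: "(k, x) \<in> dom_pts \<alpha>" using kx sp kxe by simp
    have K: "(\<lambda>i. rep p (cidx p (k i))) \<in> UNIV \<rightarrow>\<^sub>E {0..<1}" using d rep_in cidx_lt[OF p] unfolding dom_pts_def
      by (auto simp: PiE_def Pi_def)
    have L: "(\<lambda>i\<in>\<alpha>. rep p (cidx p (x i))) \<in> \<alpha> \<rightarrow>\<^sub>E {0..<1}" using d rep_in cidx_lt[OF p] unfolding dom_pts_def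
      by (auto simp: PiE_def Pi_def)
    have d2: "((\<lambda>i. rep p (cidx p (k i))), (\<lambda>i\<in>\<alpha>. rep p (cidx p (x i)))) \<in> dom_pts \<alpha>"
      using K L unfolding dom_pts_def by simp
    have sc: "samecell p \<alpha> (\<lambda>i. rep p (cidx p (k i))) (\<lambda>i\<in>\<alpha>. rep p (cidx p (x i))) k x"
      unfolding samecell_def using p by (simp add: cidx_rep)
    have "f (g kx) kx = A \<alpha> (\<lambda>i. rep p (cidx p (k i))) (\<lambda>i\<in>\<alpha>. rep p (cidx p (x i)))"
      unfolding f_def g_def kxe by (simp cong: restrict_cong)
    also have "\<dots> = A \<alpha> k x" using A d d2 sc unfolding cc_def by blast
    finally show "f (g kx) kx = A \<alpha> (fst kx) (snd kx)" by (simp add: kxe)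
  qed
qed

definition Top :: "('n::finite, 'm::finite) coeffs \<Rightarrow> 'n set \<Rightarrow> (('n \<Rightarrow> real) \<Rightarrow> complex^'m) \<Rightarrow> ('n \<Rightarrow> real) \<Rightarrow> complex^'m" where
  "Top A \<alpha> u k = (\<integral>x. A \<alpha> k x *v u (merge_pt \<alpha> k x) \<partial>cube \<alpha>)"

lemma opL_Top: "opL A u k = (\<Sum>\<alpha>\<in>UNIV. Top A \<alpha> u k)"
  unfolding opL_def Top_def ..

lemma mv_cont: "continuous_on UNIV (\<lambda>x. fst x *v (snd x :: complex^'m::finite) :: complex^'m)"
  unfolding matrix_vector_mult_def by (intro continuous_intros)

lemma integrand_meas:
  fixes A :: "('n::finite, 'm::finite) coeffs"
  assumes p: "p > 0" and A: "cc p \<alpha> (A \<alpha>)" and u: "u \<in> borel_measurable (cube UNIV)"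
  shows "(\<lambda>kx. A \<alpha> (fst kx) (snd kx) *v u (merge_pt \<alpha> (fst kx) (snd kx))) \<in> borel_measurable (cube UNIV \<Otimes>\<^sub>M cube \<alpha>)"
proof -
  have "(\<lambda>kx. u (merge_pt \<alpha> (fst kx) (snd kx))) \<in> borel_measurable (cube UNIV \<Otimes>\<^sub>M cube \<alpha>)"
    using measurable_comp[OF measurable_merge_pt u] by (simp add: comp_def)
  then show ?thesis
    using borel_measurable_continuous_Pair[OF coeff_meas[where A=A and \<alpha>=\<alpha> and p=p, OF p A] _ mv_cont] by simp
qed

lemma Top_meas:
  fixes A :: "('n::finite, 'm::finite) coeffs"
  assumes p: "p > 0" and A: "cc p \<alpha> (A \<alpha>)" and u: "u \<in> borel_measurable (cube UNIV)"
  shows "Top A \<alpha> u \<in> borel_measurable (cube UNIV)"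
proof -
  interpret Ca: prob_space "cube \<alpha>" by (rule cube_prob)
  show ?thesis unfolding Top_def
    by (rule Ca.borel_measurable_lebesgue_integral) (use integrand_meas[where A=A and \<alpha>=\<alpha> and p=p, OF p A u] in \<open>simp add: split_beta'\<close>)
qed

lemma mv_bound: "norm ((M :: complex^'m::finite^'m) *v (v :: complex^'m)) \<le> (\<Sum>i\<in>UNIV. \<Sum>j\<in>UNIV. norm (M $ i $ j)) * norm v"
proof -
  have l1: "norm (w :: complex^'m) \<le> (\<Sum>i\<in>UNIV. norm (w $ i))" for w
    unfolding norm_vec_def by (rule L2_set_le_sum) auto
  have "norm (M *v v) \<le> (\<Sum>i\<in>UNIV. norm ((M *v v) $ i))" by (rule l1)
  also have "\<dots> \<le> (\<Sum>i\<in>UNIV. \<Sum>j\<in>UNIV. norm (M $ i $ j) * norm v)"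
  proof (intro sum_mono)
    fix i
    have "norm ((M *v v) $ i) = norm (\<Sum>j\<in>UNIV. M $ i $ j * v $ j)" by (simp add: matrix_vector_mult_def)
    also have "\<dots> \<le> (\<Sum>j\<in>UNIV. norm (M $ i $ j * v $ j))" by (rule norm_sum)
    also have "\<dots> \<le> (\<Sum>j\<in>UNIV. norm (M $ i $ j) * norm v)"
      by (intro sum_mono) (simp add: norm_mult mult_left_mono Finite_Cartesian_Product.norm_nth_le)
    finally show "norm ((M *v v) $ i) \<le> (\<Sum>j\<in>UNIV. norm (M $ i $ j) * norm v)" .
  qed
  also have "\<dots> = (\<Sum>i\<in>UNIV. \<Sum>j\<in>UNIV. norm (M $ i $ j)) * norm v" by (simp add: sum_distrib_right)
  finally show ?thesis .
qed

lemma mv_bound_dom: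
  fixes A :: "('n::finite, 'm::finite) coeffs"
  assumes p: "p > 0" and A: "\<forall>\<alpha>. cc p \<alpha> (A \<alpha>)" and kx: "(k, x) \<in> dom_pts \<alpha>"
  shows "norm (A \<alpha> k x *v v) \<le> real CARD('m) * mx A \<alpha> * norm v"
proof -
  have "norm (A \<alpha> k x *v v) \<le> (\<Sum>i\<in>UNIV. rsum A \<alpha> k x i) * norm v" unfolding rsum_def by (rule mv_bound)
  also have "\<dots> \<le> (\<Sum>i\<in>(UNIV::'m set). mx A \<alpha>) * norm v" by (intro mult_right_mono sum_mono mx_ge[OF p A kx]) auto
  finally show ?thesis by simp
qed

lemma space_dom: "k \<in> space (cube UNIV) \<Longrightarrow> x \<in> space (cube \<alpha>) \<Longrightarrow> (k, x) \<in> dom_pts \<alpha>"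
  unfolding dom_pts_def space_cube by simp

lemma u_slice_meas:
  assumes u: "u \<in> borel_measurable (cube UNIV)" and k: "k \<in> space (cube UNIV)"
  shows "(\<lambda>x. u (merge_pt \<alpha> k x)) \<in> borel_measurable (cube \<alpha>)"
proof -
  have "(\<lambda>kx. u (merge_pt \<alpha> (fst kx) (snd kx))) \<in> borel_measurable (cube UNIV \<Otimes>\<^sub>M cube \<alpha>)"
    using measurable_comp[OF measurable_merge_pt u] by (simp add: comp_def)
  from measurable_Pair2[OF this k] show ?thesis by simp
qed

lemma CS_prob:
  assumes P: "prob_space M" and g: "g \<in> borel_measurable M"
  shows "(\<integral>\<^sup>+x. g x \<partial>M)\<^sup>2 \<le> (\<integral>\<^sup>+x. (g x)\<^sup>2 \<partial>M)"
proof -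
  interpret prob_space M by (rule P)
  have "(\<integral>\<^sup>+x. g x * 1 \<partial>M)\<^sup>2 \<le> (\<integral>\<^sup>+x. g x ^ 2 \<partial>M) * (\<integral>\<^sup>+x. 1 ^ 2 \<partial>M)"
    by (rule Cauchy_Schwarz_nn_integral) (auto simp: g)
  then show ?thesis by (simp add: emeasure_space_1)
qed

lemma Top_bound:
  fixes A :: "('n::finite, 'm::finite) coeffs"
  assumes p: "p > 0" and A: "\<forall>\<alpha>. cc p \<alpha> (A \<alpha>)" and u: "u \<in> borel_measurable (cube UNIV)"
    and k: "k \<in> space (cube UNIV)"
  shows "ennreal ((norm (Top A \<alpha> u k))\<^sup>2) \<le> ennreal ((real CARD('m) * mx A \<alpha>)\<^sup>2) * (\<integral>\<^sup>+x. ennreal ((norm (u (merge_pt \<alpha> k x)))\<^sup>2) \<partial>cube \<alpha>)"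
proof -
  interpret Ca: prob_space "cube \<alpha>" by (rule cube_prob)
  define c where "c = real CARD('m) * mx A \<alpha>"
  have c0: "c \<ge> 0" unfolding c_def using mx_nonneg[OF p A] by simp
  have gm: "(\<lambda>x. ennreal (norm (u (merge_pt \<alpha> k x)))) \<in> borel_measurable (cube \<alpha>)"
    using u_slice_meas[OF u k] by measurable
  have s1: "ennreal (norm (Top A \<alpha> u k)) \<le> (\<integral>\<^sup>+x. ennreal (c * norm (u (merge_pt \<alpha> k x))) \<partial>cube \<alpha>)"
  proof (cases "integrable (cube \<alpha>) (\<lambda>x. A \<alpha> k x *v u (merge_pt \<alpha> k x))")
    case True
    have "ennreal (norm (Top A \<alpha> u k)) \<le> (\<integral>\<^sup>+x. norm (A \<alpha> k x *v u (merge_pt \<alpha> k x)) \<partial>cube \<alpha>)"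
      unfolding Top_def by (rule integral_norm_bound_ennreal[OF True])
    also have "\<dots> \<le> (\<integral>\<^sup>+x. ennreal (c * norm (u (merge_pt \<alpha> k x))) \<partial>cube \<alpha>)"
      by (intro nn_integral_mono ennreal_leI) (use mv_bound_dom[OF p A space_dom[OF k]] in \<open>simp add: c_def\<close>)
    finally show ?thesis .
  next
    case False
    then show ?thesis unfolding Top_def by (simp add: not_integrable_integral_eq)
  qed
  also have "\<dots> = ennreal c * (\<integral>\<^sup>+x. ennreal (norm (u (merge_pt \<alpha> k x))) \<partial>cube \<alpha>)"
    using c0 by (simp add: ennreal_mult nn_integral_cmult gm)
  finally have s2: "ennreal (norm (Top A \<alpha> u k)) \<le> ennreal c * (\<integral>\<^sup>+x. ennreal (norm (u (merge_pt \<alpha> k x))) \<partial>cube \<alpha>)" .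
  have "ennreal ((norm (Top A \<alpha> u k))\<^sup>2) = (ennreal (norm (Top A \<alpha> u k)))\<^sup>2"
    by (simp add: ennreal_power)
  also have "\<dots> \<le> (ennreal c * (\<integral>\<^sup>+x. ennreal (norm (u (merge_pt \<alpha> k x))) \<partial>cube \<alpha>))\<^sup>2"
    by (rule power_mono[OF s2]) simp
  also have "\<dots> = (ennreal c)\<^sup>2 * (\<integral>\<^sup>+x. ennreal (norm (u (merge_pt \<alpha> k x))) \<partial>cube \<alpha>)\<^sup>2"
    by (simp add: power_mult_distrib)
  also have "\<dots> \<le> (ennreal c)\<^sup>2 * (\<integral>\<^sup>+x. (ennreal (norm (u (merge_pt \<alpha> k x))))\<^sup>2 \<partial>cube \<alpha>)"
    by (intro mult_left_mono CS_prob[OF cube_prob gm]) simp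
  also have "\<dots> = ennreal (c\<^sup>2) * (\<integral>\<^sup>+x. ennreal ((norm (u (merge_pt \<alpha> k x)))\<^sup>2) \<partial>cube \<alpha>)"
    using c0 by (simp add: ennreal_power)
  finally show ?thesis unfolding c_def .
qed

lemma inner_meas:
  fixes f :: "('n::finite \<Rightarrow> real) \<Rightarrow> ennreal"
  assumes f: "f \<in> borel_measurable (cube UNIV)"
  shows "(\<lambda>k. \<integral>\<^sup>+x. f (merge_pt \<alpha> k x) \<partial>cube \<alpha>) \<in> borel_measurable (cube UNIV)"
proof -
  interpret Ca: prob_space "cube \<alpha>" by (rule cube_prob)
  have fm: "(\<lambda>kx. f (merge_pt \<alpha> (fst kx) (snd kx))) \<in> borel_measurable (cube UNIV \<Otimes>\<^sub>M cube \<alpha>)"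
    using measurable_comp[OF measurable_merge_pt f] by (simp add: comp_def)
  show ?thesis
    using Ca.borel_measurable_nn_integral[of "\<lambda>k x. f (merge_pt \<alpha> k x)" "cube UNIV"] fm
    by (simp add: split_beta')
qed

lemma sq_sum_le: "(\<Sum>i\<in>I. a i)\<^sup>2 \<le> real (card I) * (\<Sum>i\<in>I. (a i)\<^sup>2)"
proof -
  have "(\<Sum>i\<in>I. a i * 1)\<^sup>2 \<le> (\<Sum>i\<in>I. (a i)\<^sup>2) * (\<Sum>i\<in>I. 1\<^sup>2)" by (rule Cauchy_Schwarz_ineq_sum)
  then show ?thesis by (simp add: mult.commute)
qed

lemma sum_sq_le: "(\<And>i. i \<in> I \<Longrightarrow> (a i :: real) \<ge> 0) \<Longrightarrow> (\<Sum>i\<in>I. (a i)\<^sup>2) \<le> (\<Sum>i\<in>I. a i)\<^sup>2"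
proof (induction I rule: infinite_finite_induct)
  case (insert x F)
  have s0: "sum a F \<ge> 0" using insert by (simp add: sum_nonneg)
  have "(\<Sum>i\<in>insert x F. (a i)\<^sup>2) = (a x)\<^sup>2 + (\<Sum>i\<in>F. (a i)\<^sup>2)" using insert by simp
  also have "\<dots> \<le> (a x)\<^sup>2 + (sum a F)\<^sup>2" using insert by simp
  also have "\<dots> \<le> (a x + sum a F)\<^sup>2" using s0 insert.prems[of x] by (simp add: power2_sum)
  finally show ?case using insert by simp
qed auto

definition K0 :: "'n itself \<Rightarrow> 'm itself \<Rightarrow> real" where
  "K0 _ _ = real (card (UNIV :: 'n set set)) * (real CARD('m))\<^sup>2"

lemma part_bound:
  fixes A :: "('n::finite, 'm::finite) coeffs"
  assumes p: "p > 0" and A: "\<forall>\<alpha>. cc p \<alpha> (A \<alpha>)" and u: "isL2 u"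
  shows "isL2 (opL A u) \<and> L2norm (opL A u) \<le> sqrt (K0 TYPE('n) TYPE('m)) * normL A * L2norm u"
proof -
  let ?Q = "cube (UNIV :: 'n set)"
  have um: "u \<in> borel_measurable ?Q" and ui: "integrable ?Q (\<lambda>k. (norm (u k))\<^sup>2)" using u unfolding isL2_def by auto
  define nu where "nu = (\<integral>k. (norm (u k))\<^sup>2 \<partial>?Q)"
  have nu0: "nu \<ge> 0" unfolding nu_def by simp
  have Nu: "(\<integral>\<^sup>+k. ennreal ((norm (u k))\<^sup>2) \<partial>?Q) = ennreal nu"
    unfolding nu_def by (rule nn_integral_eq_integral[OF ui]) simp
  define c where "c \<alpha> = real CARD('m) * mx A \<alpha>" for \<alpha>
  have c0: "c \<alpha> \<ge> 0" for \<alpha> unfolding c_def using mx_nonneg[OF p A] by simp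
  define N where "N = real (card (UNIV :: 'n set set))"
  have Tm: "Top A \<alpha> u \<in> borel_measurable ?Q" for \<alpha> using Top_meas[OF p _ um] A by blast
  have Om: "opL A u \<in> borel_measurable ?Q"
  proof -
    have "(\<lambda>k. \<Sum>\<alpha>\<in>UNIV. Top A \<alpha> u k) \<in> borel_measurable ?Q" using Tm by (intro borel_measurable_sum) auto
    then show ?thesis unfolding opL_Top[abs_def] by simp
  qed
  have pw: "(norm (opL A u k))\<^sup>2 \<le> N * (\<Sum>\<alpha>\<in>UNIV. (norm (Top A \<alpha> u k))\<^sup>2)" for k
  proof -
    have "norm (opL A u k) \<le> (\<Sum>\<alpha>\<in>UNIV. norm (Top A \<alpha> u k))" unfolding opL_Top by (rule norm_sum)
    then have "(norm (opL A u k))\<^sup>2 \<le> (\<Sum>\<alpha>\<in>UNIV. norm (Top A \<alpha> u k))\<^sup>2" by (simp add: power_mono)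
    also have "\<dots> \<le> N * (\<Sum>\<alpha>\<in>UNIV. (norm (Top A \<alpha> u k))\<^sup>2)" unfolding N_def by (rule sq_sum_le)
    finally show ?thesis .
  qed
  have each: "(\<integral>\<^sup>+k. ennreal ((norm (Top A \<alpha> u k))\<^sup>2) \<partial>?Q) \<le> ennreal ((c \<alpha>)\<^sup>2) * ennreal nu" for \<alpha>
  proof -
    have fm: "(\<lambda>k. ennreal ((norm (u k))\<^sup>2)) \<in> borel_measurable ?Q" using um by measurable
    have "(\<integral>\<^sup>+k. ennreal ((norm (Top A \<alpha> u k))\<^sup>2) \<partial>?Q) \<le>
          (\<integral>\<^sup>+k. ennreal ((c \<alpha>)\<^sup>2) * (\<integral>\<^sup>+x. ennreal ((norm (u (merge_pt \<alpha> k x)))\<^sup>2) \<partial>cube \<alpha>) \<partial>?Q)"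
      by (intro nn_integral_mono) (use Top_bound[OF p A um] in \<open>simp add: c_def\<close>)
    also have "\<dots> = ennreal ((c \<alpha>)\<^sup>2) * (\<integral>\<^sup>+k. (\<integral>\<^sup>+x. ennreal ((norm (u (merge_pt \<alpha> k x)))\<^sup>2) \<partial>cube \<alpha>) \<partial>?Q)"
      using inner_meas[OF fm, of \<alpha>] by (simp add: nn_integral_cmult)
    also have "\<dots> = ennreal ((c \<alpha>)\<^sup>2) * ennreal nu"
      using KM[OF fm, of \<alpha>] Nu by simp
    finally show ?thesis .
  qed
  have "(\<integral>\<^sup>+k. ennreal ((norm (opL A u k))\<^sup>2) \<partial>?Q) \<le> (\<integral>\<^sup>+k. ennreal (N * (\<Sum>\<alpha>\<in>UNIV. (norm (Top A \<alpha> u k))\<^sup>2)) \<partial>?Q)"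
    by (intro nn_integral_mono ennreal_leI pw)
  also have "\<dots> = (\<integral>\<^sup>+k. ennreal N * (\<Sum>\<alpha>\<in>UNIV. ennreal ((norm (Top A \<alpha> u k))\<^sup>2)) \<partial>?Q)"
    by (simp add: ennreal_mult N_def sum_nonneg)
  also have "\<dots> = ennreal N * (\<Sum>\<alpha>\<in>UNIV. (\<integral>\<^sup>+k. ennreal ((norm (Top A \<alpha> u k))\<^sup>2) \<partial>?Q))"
  proof -
    have sm: "(\<lambda>k. ennreal ((norm (Top A \<alpha> u k))\<^sup>2)) \<in> borel_measurable ?Q" for \<alpha>
      using Tm[of \<alpha>] by measurable
    have sm2: "(\<lambda>k. \<Sum>\<alpha>\<in>UNIV. ennreal ((norm (Top A \<alpha> u k))\<^sup>2)) \<in> borel_measurable ?Q"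
      using sm by (intro borel_measurable_sum) auto
    show ?thesis
      by (simp only: nn_integral_cmult[OF sm2] nn_integral_sum[OF sm])
  qed
  also have "\<dots> \<le> ennreal N * (\<Sum>\<alpha>\<in>UNIV. ennreal ((c \<alpha>)\<^sup>2) * ennreal nu)"
    by (intro mult_left_mono sum_mono each) simp
  also have "\<dots> = ennreal (N * (\<Sum>\<alpha>\<in>UNIV. (c \<alpha>)\<^sup>2) * nu)"
    using nu0 by (simp add: ennreal_mult[symmetric] sum_distrib_right[symmetric] N_def sum_nonneg mult.assoc)
  also have "\<dots> \<le> ennreal (K0 TYPE('n) TYPE('m) * (normL A)\<^sup>2 * nu)"
  proof (intro ennreal_leI mult_right_mono nu0)
    have "(\<Sum>\<alpha>\<in>UNIV. (c \<alpha>)\<^sup>2) \<le> (\<Sum>\<alpha>\<in>UNIV. c \<alpha>)\<^sup>2" by (rule sum_sq_le) (rule c0)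
    also have "(\<Sum>\<alpha>\<in>UNIV. c \<alpha>) = real CARD('m) * normL A"
      unfolding c_def normL_mx by (simp add: sum_distrib_left)
    finally have "(\<Sum>\<alpha>\<in>UNIV. (c \<alpha>)\<^sup>2) \<le> (real CARD('m))\<^sup>2 * (normL A)\<^sup>2" by (simp add: power_mult_distrib)
    then have "N * (\<Sum>\<alpha>\<in>UNIV. (c \<alpha>)\<^sup>2) \<le> N * ((real CARD('m))\<^sup>2 * (normL A)\<^sup>2)"
      by (intro mult_left_mono) (auto simp: N_def)
    then show "N * (\<Sum>\<alpha>\<in>UNIV. (c \<alpha>)\<^sup>2) \<le> K0 TYPE('n) TYPE('m) * (normL A)\<^sup>2"
      by (simp add: K0_def N_def mult.assoc)
  qed
  finally have I: "(\<integral>\<^sup>+k. ennreal ((norm (opL A u k))\<^sup>2) \<partial>?Q) \<le> ennreal (K0 TYPE('n) TYPE('m) * (normL A)\<^sup>2 * nu)" .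
  have Osq: "(\<lambda>k. (norm (opL A u k))\<^sup>2) \<in> borel_measurable ?Q" using Om by measurable
  have fin: "(\<integral>\<^sup>+k. ennreal ((norm (opL A u k))\<^sup>2) \<partial>?Q) < \<infinity>"
    using I by (simp add: le_less_trans)
  have Oi: "integrable ?Q (\<lambda>k. (norm (opL A u k))\<^sup>2)"
    using fin Osq by (intro integrableI_nonneg) auto
  have "ennreal (\<integral>k. (norm (opL A u k))\<^sup>2 \<partial>?Q) = (\<integral>\<^sup>+k. ennreal ((norm (opL A u k))\<^sup>2) \<partial>?Q)"
    by (rule nn_integral_eq_integral[OF Oi, symmetric]) simp
  then have ineq: "(\<integral>k. (norm (opL A u k))\<^sup>2 \<partial>?Q) \<le> K0 TYPE('n) TYPE('m) * (normL A)\<^sup>2 * nu"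
  proof -
    have "ennreal (\<integral>k. (norm (opL A u k))\<^sup>2 \<partial>?Q) \<le> ennreal (K0 TYPE('n) TYPE('m) * (normL A)\<^sup>2 * nu)"
      using I \<open>ennreal (\<integral>k. (norm (opL A u k))\<^sup>2 \<partial>?Q) = _\<close> by simp
    moreover have "K0 TYPE('n) TYPE('m) * (normL A)\<^sup>2 * nu \<ge> 0" using nu0 by (simp add: K0_def)
    ultimately show ?thesis by (simp add: ennreal_le_iff)
  qed
  have nL: "normL A \<ge> 0" by (rule normL_nonneg[OF p A])
  have K00: "K0 TYPE('n) TYPE('m) \<ge> 0" by (simp add: K0_def)
  have "L2norm (opL A u) \<le> sqrt (K0 TYPE('n) TYPE('m) * (normL A)\<^sup>2 * nu)"
    unfolding L2norm_def using ineq by simp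
  also have "\<dots> = sqrt (K0 TYPE('n) TYPE('m)) * normL A * L2norm u"
    unfolding L2norm_def nu_def[symmetric] using nL by (simp add: real_sqrt_mult)
  finally show ?thesis using Om Oi unfolding isL2_def by simp
qed

lemma bl_mv: "bounded_linear (\<lambda>v. (M :: complex^'m::finite^'m) *v v)"
proof (rule bounded_linear_intro)
  show "M *v (x + y) = M *v x + M *v y" for x y by (simp add: matrix_vector_right_distrib)
  show "M *v (r *\<^sub>R x) = r *\<^sub>R (M *v x)" for r x
    by (simp add: vec_eq_iff matrix_vector_mult_def scaleR_sum_right)
  show "norm (M *v x) \<le> norm x * (\<Sum>i\<in>UNIV. \<Sum>j\<in>UNIV. norm (M $ i $ j))" for x
    using mv_bound[of M x] by (simp add: mult.commute)
qed

lemma bl_mv_left: "bounded_linear (\<lambda>M. (M :: complex^'m::finite^'m) *v v)"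
proof (rule bounded_linear_intro)
  show "(x + y) *v v = x *v v + y *v v" for x y by (simp add: vec_eq_iff matrix_vector_mult_def sum.distrib algebra_simps)
  show "(r *\<^sub>R x) *v v = r *\<^sub>R (x *v v)" for r x
    by (simp add: vec_eq_iff matrix_vector_mult_def scaleR_sum_right)
  show "norm (x *v v) \<le> norm x * (real CARD('m) * real CARD('m) * norm v)" for x :: "complex^'m^'m"
  proof -
    have "norm (x *v v) \<le> (\<Sum>i\<in>UNIV. \<Sum>j\<in>UNIV. norm (x $ i $ j)) * norm v" by (rule mv_bound)
    also have "\<dots> \<le> (\<Sum>i\<in>(UNIV::'m set). \<Sum>j\<in>(UNIV::'m set). norm x) * norm v"
      by (intro mult_right_mono sum_mono entry_le_norm) auto
    finally show ?thesis by (simp add: algebra_simps)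
  qed
qed

definition rs :: "complex^'m::finite^'m \<Rightarrow> 'm \<Rightarrow> real" where
  "rs M i = (\<Sum>j\<in>UNIV. norm (M $ i $ j))"

lemma rs_nonneg: "rs M i \<ge> 0" unfolding rs_def by (simp add: sum_nonneg)

lemma rs_mult:
  assumes "\<And>l. rs N l \<le> c"
  shows "rs (M ** N) i \<le> rs M i * c"
proof -
  have "rs (M ** N) i = (\<Sum>j\<in>UNIV. norm (\<Sum>l\<in>UNIV. M $ i $ l * N $ l $ j))"
    unfolding rs_def by (simp add: matrix_matrix_mult_def)
  also have "\<dots> \<le> (\<Sum>j\<in>UNIV. \<Sum>l\<in>UNIV. norm (M $ i $ l) * norm (N $ l $ j))"
    by (intro sum_mono order_trans[OF norm_sum]) (simp add: norm_mult)
  also have "\<dots> = (\<Sum>l\<in>UNIV. norm (M $ i $ l) * rs N l)"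
    unfolding rs_def by (subst sum.swap) (simp add: sum_distrib_left)
  also have "\<dots> \<le> (\<Sum>l\<in>UNIV. norm (M $ i $ l) * c)"
    by (intro sum_mono mult_left_mono assms) simp
  also have "\<dots> = rs M i * c" unfolding rs_def by (simp add: sum_distrib_right)
  finally show ?thesis .
qed

lemma rs_integral:
  fixes F :: "'a \<Rightarrow> complex^'m::finite^'m"
  assumes P: "prob_space M" and c: "c \<ge> 0" and H: "\<And>w. w \<in> space M \<Longrightarrow> rs (F w) i \<le> c"
  shows "rs (\<integral>w. F w \<partial>M) i \<le> c"
proof (cases "integrable M F")
  case True
  interpret prob_space M by (rule P)
  have bl: "bounded_linear (\<lambda>N::complex^'m^'m. N $ i $ j)" for j
    by (rule bounded_linear_intro[where K=1]) (auto simp: entry_le_norm)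
  have ij: "integrable M (\<lambda>w. F w $ i $ j)" for j using integrable_bounded_linear[OF bl True] .
  have "rs (\<integral>w. F w \<partial>M) i = (\<Sum>j\<in>UNIV. norm (\<integral>w. F w $ i $ j \<partial>M))"
    unfolding rs_def using integral_bounded_linear[OF bl True] by simp
  also have "\<dots> \<le> (\<Sum>j\<in>UNIV. \<integral>w. norm (F w $ i $ j) \<partial>M)"
    by (intro sum_mono integral_norm_bound)
  also have "\<dots> = (\<integral>w. rs (F w) i \<partial>M)"
    unfolding rs_def using ij Bochner_Integration.integral_sum[where I=UNIV and M=M and f="\<lambda>j w. norm (F w $ i $ j)", symmetric] by auto
  also have "\<dots> \<le> (\<integral>w. c \<partial>M)"
    using c H by (intro integral_mono') auto
  also have "\<dots> = c" by (simp add: prob_space)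
  finally show ?thesis .
next
  case False
  then show ?thesis using c by (simp add: not_integrable_integral_eq rs_def)
qed

definition Cp :: "('n, 'm::finite) coeffs \<Rightarrow> ('n, 'm) coeffs \<Rightarrow> 'n set \<Rightarrow> 'n set \<Rightarrow> ('n \<Rightarrow> real) \<Rightarrow> ('n \<Rightarrow> real) \<Rightarrow> complex^'m^'m" where
  "Cp A B \<alpha> \<beta> k z = (\<integral>w. A \<alpha> k (merge (\<alpha> - \<beta>) (\<alpha> \<inter> \<beta>) (z, w)) **
       B \<beta> (merge_pt \<alpha> k (merge (\<alpha> - \<beta>) (\<alpha> \<inter> \<beta>) (z, w))) (restrict z \<beta>) \<partial>cube (\<alpha> \<inter> \<beta>))"

definition compC :: "('n, 'm::finite) coeffs \<Rightarrow> ('n, 'm) coeffs \<Rightarrow> ('n, 'm) coeffs" where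
  "compC A B \<gamma> k z = (\<Sum>ab\<in>{ab. fst ab \<union> snd ab = \<gamma>}. Cp A B (fst ab) (snd ab) k z)"

lemma xw_dom:
  assumes "(k, z) \<in> dom_pts \<gamma>" "\<alpha> \<union> \<beta> = \<gamma>" "w \<in> space (cube (\<alpha> \<inter> \<beta>))"
  shows "(k, merge (\<alpha> - \<beta>) (\<alpha> \<inter> \<beta>) (z, w)) \<in> dom_pts \<alpha>"
    and "(merge_pt \<alpha> k (merge (\<alpha> - \<beta>) (\<alpha> \<inter> \<beta>) (z, w)), restrict z \<beta>) \<in> dom_pts \<beta>"
  using assms unfolding dom_pts_def space_cube merge_def merge_pt_def
  by (auto simp: PiE_def Pi_def extensional_def)

lemma cc_Cp:
  fixes A B :: "('n::finite, 'm::finite) coeffs"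
  assumes A: "\<forall>\<alpha>. cc p \<alpha> (A \<alpha>)" and B: "\<forall>\<alpha>. cc p \<alpha> (B \<alpha>)" and g: "\<alpha> \<union> \<beta> = \<gamma>"
  shows "cc p \<gamma> (Cp A B \<alpha> \<beta>)"
  unfolding cc_def
proof (intro allI impI)
  fix k z k' z' assume kz: "(k, z) \<in> dom_pts \<gamma>" and kz': "(k', z') \<in> dom_pts \<gamma>" and sc: "samecell p \<gamma> k z k' z'"
  show "Cp A B \<alpha> \<beta> k z = Cp A B \<alpha> \<beta> k' z'"
    unfolding Cp_def
  proof (rule Bochner_Integration.integral_cong[OF refl])
    fix w assume w: "w \<in> space (cube (\<alpha> \<inter> \<beta>))"
    let ?x = "merge (\<alpha> - \<beta>) (\<alpha> \<inter> \<beta>) (z, w)" and ?x' = "merge (\<alpha> - \<beta>) (\<alpha> \<inter> \<beta>) (z', w)"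
    have s1: "samecell p \<alpha> k ?x k' ?x'" using sc g unfolding samecell_def merge_def by auto
    have s2: "samecell p \<beta> (merge_pt \<alpha> k ?x) (restrict z \<beta>) (merge_pt \<alpha> k' ?x') (restrict z' \<beta>)"
      using sc g unfolding samecell_def merge_def merge_pt_def by auto
    have "A \<alpha> k ?x = A \<alpha> k' ?x'" using A xw_dom(1)[OF kz g w] xw_dom(1)[OF kz' g w] s1 unfolding cc_def by blast
    moreover have "B \<beta> (merge_pt \<alpha> k ?x) (restrict z \<beta>) = B \<beta> (merge_pt \<alpha> k' ?x') (restrict z' \<beta>)"
      using B xw_dom(2)[OF kz g w] xw_dom(2)[OF kz' g w] s2 unfolding cc_def by blast
    ultimately show "A \<alpha> k ?x ** B \<beta> (merge_pt \<alpha> k ?x) (restrict z \<beta>) = A \<alpha> k' ?x' ** B \<beta> (merge_pt \<alpha> k' ?x') (restrict z' \<beta>)"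
      by simp
  qed
qed

lemma cc_compC:
  fixes A B :: "('n::finite, 'm::finite) coeffs"
  assumes A: "\<forall>\<alpha>. cc p \<alpha> (A \<alpha>)" and B: "\<forall>\<alpha>. cc p \<alpha> (B \<alpha>)"
  shows "\<forall>\<gamma>. cc p \<gamma> (compC A B \<gamma>)"
proof
  fix \<gamma> :: "'n set"
  have "cc p \<gamma> (Cp A B (fst ab) (snd ab))" if "ab \<in> {ab. fst ab \<union> snd ab = \<gamma>}" for ab
    using cc_Cp[OF A B] that by auto
  then show "cc p \<gamma> (compC A B \<gamma>)" unfolding cc_def compC_def by (intro allI impI sum.cong) (auto intro!: sum.cong)
qed

lemma rs_Cp:
  fixes A B :: "('n::finite, 'm::finite) coeffs"
  assumes p: "p > 0" and A: "\<forall>\<alpha>. cc p \<alpha> (A \<alpha>)" and B: "\<forall>\<alpha>. cc p \<alpha> (B \<alpha>)" and g: "\<alpha> \<union> \<beta> = \<gamma>"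
    and kz: "(k, z) \<in> dom_pts \<gamma>"
  shows "rs (Cp A B \<alpha> \<beta> k z) i \<le> mx A \<alpha> * mx B \<beta>"
  unfolding Cp_def
proof (rule rs_integral[OF cube_prob])
  show "0 \<le> mx A \<alpha> * mx B \<beta>" using mx_nonneg[OF p A] mx_nonneg[OF p B] by simp
  fix w assume w: "w \<in> space (cube (\<alpha> \<inter> \<beta>))"
  let ?x = "merge (\<alpha> - \<beta>) (\<alpha> \<inter> \<beta>) (z, w)"
  have "rs (A \<alpha> k ?x ** B \<beta> (merge_pt \<alpha> k ?x) (restrict z \<beta>)) i \<le> rs (A \<alpha> k ?x) i * mx B \<beta>"
    by (rule rs_mult) (use mx_ge[OF p B xw_dom(2)[OF kz g w]] in \<open>simp add: rs_def rsum_def\<close>)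
  also have "\<dots> \<le> mx A \<alpha> * mx B \<beta>"
    using mx_ge[OF p A xw_dom(1)[OF kz g w]] mx_nonneg[OF p B]
    by (intro mult_right_mono) (auto simp: rs_def rsum_def)
  finally show "rs (A \<alpha> k ?x ** B \<beta> (merge_pt \<alpha> k ?x) (restrict z \<beta>)) i \<le> mx A \<alpha> * mx B \<beta>" .
qed

lemma normL_compC:
  fixes A B :: "('n::finite, 'm::finite) coeffs"
  assumes p: "p > 0" and A: "\<forall>\<alpha>. cc p \<alpha> (A \<alpha>)" and B: "\<forall>\<alpha>. cc p \<alpha> (B \<alpha>)"
  shows "normL (compC A B) \<le> normL A * normL B"
proof -
  have C: "\<forall>\<gamma>. cc p \<gamma> (compC A B \<gamma>)" by (rule cc_compC[OF A B])
  have "mx (compC A B) \<gamma> \<le> (\<Sum>ab\<in>{ab. fst ab \<union> snd ab = \<gamma>}. mx A (fst ab) * mx B (snd ab))" for \<gamma>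
  proof (rule mx_le[OF p C])
    fix k z i assume kz: "(k, z) \<in> dom_pts \<gamma>"
    have "rsum (compC A B) \<gamma> k z i \<le> (\<Sum>ab\<in>{ab. fst ab \<union> snd ab = \<gamma>}. rs (Cp A B (fst ab) (snd ab) k z) i)"
      unfolding rsum_def compC_def rs_def
      by (subst sum.swap) (intro sum_mono, simp add: norm_sum)
    also have "\<dots> \<le> (\<Sum>ab\<in>{ab. fst ab \<union> snd ab = \<gamma>}. mx A (fst ab) * mx B (snd ab))"
      by (intro sum_mono rs_Cp[OF p A B _ kz]) auto
    finally show "rsum (compC A B) \<gamma> k z i \<le> (\<Sum>ab\<in>{ab. fst ab \<union> snd ab = \<gamma>}. mx A (fst ab) * mx B (snd ab))" .
  qed
  then have "normL (compC A B) \<le> (\<Sum>\<gamma>\<in>UNIV. \<Sum>ab\<in>{ab. fst ab \<union> snd ab = \<gamma>}. mx A (fst ab) * mx B (snd ab))"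
    unfolding normL_mx by (intro sum_mono) auto
  also have "\<dots> = (\<Sum>ab\<in>UNIV. mx A (fst ab) * mx B (snd ab))"
    using sum.group[of UNIV UNIV "\<lambda>ab::'n set \<times> 'n set. fst ab \<union> snd ab" "\<lambda>ab. mx A (fst ab) * mx B (snd ab)"]
    by simp
  also have "\<dots> = normL A * normL B"
    unfolding normL_mx sum_product UNIV_Times_UNIV[symmetric] sum.cartesian_product by (simp add: case_prod_beta)
  finally show ?thesis .
qed

lemma psf_cube: "pair_sigma_finite (cube I) (cube J)"
proof -
  interpret I: prob_space "cube I" by (rule cube_prob)
  interpret J: prob_space "cube J" by (rule cube_prob)
  show ?thesis by unfold_locales
qed

lemma cube_meas_merge: "merge I J \<in> measurable (cube I \<Otimes>\<^sub>M cube J) (cube (I \<union> J))"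
  unfolding cube_def by (rule measurable_merge)

lemma cube_meas_restrict: "J \<subseteq> L \<Longrightarrow> (\<lambda>z. restrict z J) \<in> measurable (cube L) (cube J)"
  unfolding cube_def by (rule measurable_restrict_subset)

lemma cube_distr_merge:
  fixes I J :: "'n::finite set"
  assumes "I \<inter> J = {}"
  shows "distr (cube I \<Otimes>\<^sub>M cube J) (cube (I \<union> J)) (merge I J) = cube (I \<union> J)"
proof -
  interpret P: product_sigma_finite "\<lambda>_. unitI" by (rule psf)
  show ?thesis unfolding cube_def by (rule P.distr_merge) (use assms in auto)
qed

lemma cube_fold_integrable:
  fixes I J :: "'n::finite set" and f :: "_ \<Rightarrow> 'b::{banach, second_countable_topology}"
  assumes "I \<inter> J = {}" and f: "integrable (cube (I \<union> J)) f"
  shows "integrable (cube I \<Otimes>\<^sub>M cube J) (\<lambda>xy. f (merge I J xy))"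
proof -
  have fm: "f \<in> borel_measurable (cube (I \<union> J))" using f by auto
  show ?thesis using integrable_distr_eq[OF cube_meas_merge fm] f cube_distr_merge[OF assms(1)] by simp
qed

lemma cube_fold_int:
  fixes I J :: "'n::finite set" and f :: "_ \<Rightarrow> 'b::{banach, second_countable_topology}"
  assumes "I \<inter> J = {}" and f: "integrable (cube (I \<union> J)) f"
  shows "integral\<^sup>L (cube (I \<union> J)) f = (\<integral>x. (\<integral>y. f (merge I J (x, y)) \<partial>cube J) \<partial>cube I)"
proof -
  interpret P: product_sigma_finite "\<lambda>_. unitI" by (rule psf)
  show ?thesis using P.product_integral_fold[of I J f] assms unfolding cube_def by auto
qed

lemma cube_fold_nn:
  fixes I J :: "'n::finite set"
  assumes "I \<inter> J = {}" and f: "f \<in> borel_measurable (cube (I \<union> J))"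
  shows "integral\<^sup>N (cube (I \<union> J)) f = (\<integral>\<^sup>+x. (\<integral>\<^sup>+y. f (merge I J (x, y)) \<partial>cube J) \<partial>cube I)"
proof -
  interpret P: product_sigma_finite "\<lambda>_. unitI" by (rule psf)
  show ?thesis using P.product_nn_integral_fold[of I J f] assms unfolding cube_def by auto
qed

lemma mpk_meas: "k \<in> space (cube UNIV) \<Longrightarrow> (\<lambda>x. merge_pt \<alpha> k x) \<in> measurable (cube \<alpha>) (cube UNIV)"
  using measurable_Pair2[OF measurable_merge_pt] by simp

lemma coeff_meas_comp:
  fixes A :: "('n::finite, 'm::finite) coeffs"
  assumes p: "p > 0" and A: "cc p \<alpha> (A \<alpha>)"
    and f: "f \<in> measurable M (cube UNIV)" and g: "g \<in> measurable M (cube \<alpha>)"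
  shows "(\<lambda>\<omega>. A \<alpha> (f \<omega>) (g \<omega>)) \<in> borel_measurable M"
proof -
  have "(\<lambda>\<omega>. (f \<omega>, g \<omega>)) \<in> measurable M (cube UNIV \<Otimes>\<^sub>M cube \<alpha>)" using f g by (rule measurable_Pair)
  from measurable_comp[OF this coeff_meas[where A=A and \<alpha>=\<alpha> and p=p, OF p A]] show ?thesis by (simp add: comp_def)
qed

lemma mm_cont: "continuous_on UNIV (\<lambda>x. fst x ** (snd x :: complex^'m::finite^'m) :: complex^'m^'m)"
  unfolding matrix_matrix_mult_def by (intro continuous_intros)

lemma L2_L1:
  assumes u: "isL2 u"
  shows "integrable (cube UNIV) u"
proof -
  interpret Q: prob_space "cube UNIV" by (rule cube_prob)
  have um: "u \<in> borel_measurable (cube UNIV)" and ui: "integrable (cube UNIV) (\<lambda>k. (norm (u k))\<^sup>2)"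
    using u unfolding isL2_def by auto
  have "integrable (cube UNIV) (\<lambda>k. 1 + (norm (u k))\<^sup>2)" using ui by simp
  moreover have "norm (u k) \<le> norm (1 + (norm (u k))\<^sup>2 :: real)" for k
  proof -
    have h: "0 \<le> (norm (u k) - 1) * (norm (u k) - 1)" by simp
    have "norm (u k) \<le> 1 + (norm (u k))\<^sup>2"
      using h norm_ge_zero[of "u k"] unfolding power2_eq_square by (simp add: algebra_simps) (smt (verit) norm_ge_zero)
    then show ?thesis by simp
  qed
  ultimately show ?thesis using um
    by (intro Bochner_Integration.integrable_bound[where f="\<lambda>k. 1 + (norm (u k))\<^sup>2 :: real" and M="cube UNIV" and g=u]) auto
qed

lemma AE_good:
  fixes u :: "('n::finite \<Rightarrow> real) \<Rightarrow> complex^'m::finite"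
  assumes u: "integrable (cube UNIV) u"
  shows "AE k in cube UNIV. integrable (cube \<gamma>) (\<lambda>z. u (merge_pt \<gamma> k z))"
proof -
  have um: "u \<in> borel_measurable (cube UNIV)" using u by auto
  have fm: "(\<lambda>k. ennreal (norm (u k))) \<in> borel_measurable (cube UNIV)" using um by measurable
  have fin: "(\<integral>\<^sup>+k. ennreal (norm (u k)) \<partial>cube UNIV) < \<infinity>" using u unfolding integrable_iff_bounded by simp
  have "AE k in cube UNIV. (\<integral>\<^sup>+z. ennreal (norm (u (merge_pt \<gamma> k z))) \<partial>cube \<gamma>) \<noteq> \<infinity>"
    using nn_integral_PInf_AE[OF inner_meas[OF fm, of \<gamma>]] KM[OF fm, of \<gamma>] fin by simp
  then show ?thesis
  proof (rule AE_mp[OF _ AE_I2], intro impI)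
    fix k assume k: "k \<in> space (cube UNIV)" and H: "(\<integral>\<^sup>+z. ennreal (norm (u (merge_pt \<gamma> k z))) \<partial>cube \<gamma>) \<noteq> \<infinity>"
    show "integrable (cube \<gamma>) (\<lambda>z. u (merge_pt \<gamma> k z))"
      unfolding integrable_iff_bounded using u_slice_meas[OF um k] H by (simp add: top.not_eq_extremum)
  qed
qed

lemma Top_bound1:
  fixes A :: "('n::finite, 'm::finite) coeffs"
  assumes p: "p > 0" and A: "\<forall>\<alpha>. cc p \<alpha> (A \<alpha>)" and u: "u \<in> borel_measurable (cube UNIV)"
    and k: "k \<in> space (cube UNIV)"
  shows "ennreal (norm (Top A \<alpha> u k)) \<le> ennreal (real CARD('m) * mx A \<alpha>) * (\<integral>\<^sup>+x. ennreal (norm (u (merge_pt \<alpha> k x))) \<partial>cube \<alpha>)"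
proof -
  interpret Ca: prob_space "cube \<alpha>" by (rule cube_prob)
  define c where "c = real CARD('m) * mx A \<alpha>"
  have c0: "c \<ge> 0" unfolding c_def using mx_nonneg[OF p A] by simp
  have gm: "(\<lambda>x. ennreal (norm (u (merge_pt \<alpha> k x)))) \<in> borel_measurable (cube \<alpha>)"
    using u_slice_meas[OF u k] by measurable
  have s1: "ennreal (norm (Top A \<alpha> u k)) \<le> (\<integral>\<^sup>+x. ennreal (c * norm (u (merge_pt \<alpha> k x))) \<partial>cube \<alpha>)"
  proof (cases "integrable (cube \<alpha>) (\<lambda>x. A \<alpha> k x *v u (merge_pt \<alpha> k x))")
    case True
    have "ennreal (norm (Top A \<alpha> u k)) \<le> (\<integral>\<^sup>+x. norm (A \<alpha> k x *v u (merge_pt \<alpha> k x)) \<partial>cube \<alpha>)"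
      unfolding Top_def by (rule integral_norm_bound_ennreal[OF True])
    also have "\<dots> \<le> (\<integral>\<^sup>+x. ennreal (c * norm (u (merge_pt \<alpha> k x))) \<partial>cube \<alpha>)"
      by (intro nn_integral_mono ennreal_leI) (use mv_bound_dom[OF p A space_dom[OF k]] in \<open>simp add: c_def\<close>)
    finally show ?thesis .
  next
    case False
    then show ?thesis unfolding Top_def by (simp add: not_integrable_integral_eq)
  qed
  also have "\<dots> = ennreal c * (\<integral>\<^sup>+x. ennreal (norm (u (merge_pt \<alpha> k x))) \<partial>cube \<alpha>)"
    using c0 by (simp add: ennreal_mult nn_integral_cmult gm)
  finally show ?thesis unfolding c_def .
qed

lemma space_merge:
  "x \<in> space (cube I) \<Longrightarrow> y \<in> space (cube J) \<Longrightarrow> merge I J (x, y) \<in> space (cube (I \<union> J))"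
  unfolding space_cube merge_def by (auto simp: PiE_def Pi_def extensional_def)

lemma space_mpk: "k \<in> space (cube UNIV) \<Longrightarrow> x \<in> space (cube \<alpha>) \<Longrightarrow> merge_pt \<alpha> k x \<in> space (cube UNIV)"
  unfolding space_cube merge_pt_def by (auto simp: PiE_def Pi_def)

lemma id_mpk: "merge_pt \<beta> (merge_pt \<alpha> k x) y = merge_pt (\<alpha> \<union> \<beta>) k (merge (\<alpha> - \<beta>) \<beta> (x, y))"
  unfolding merge_pt_def merge_def by auto

lemma id_mm: "merge (\<alpha> - \<beta>) \<beta> (merge (\<alpha> - \<beta>) (\<alpha> \<inter> \<beta>) (x1, w), y) = merge (\<alpha> - \<beta>) \<beta> (x1, y)"
  unfolding merge_def by (auto simp: fun_eq_iff)

lemma id_mm2: "merge (\<alpha> - \<beta>) (\<alpha> \<inter> \<beta>) (merge (\<alpha> - \<beta>) \<beta> (x1, y), w) = merge (\<alpha> - \<beta>) (\<alpha> \<inter> \<beta>) (x1, w)"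
  unfolding merge_def by (auto simp: fun_eq_iff)

lemma id_restr: "y \<in> space (cube \<beta>) \<Longrightarrow> restrict (merge (\<alpha> - \<beta>) \<beta> (x1, y)) \<beta> = y"
  unfolding merge_def space_cube by (auto simp: fun_eq_iff PiE_def extensional_def)

lemma id_restr_merge: "merge (\<alpha> - \<beta>) (\<alpha> \<inter> \<beta>) (z, w) = merge (\<alpha> - \<beta>) (\<alpha> \<inter> \<beta>) (restrict z (\<alpha> - \<beta>), w)"
  unfolding merge_def by (auto simp: fun_eq_iff)

lemma id_restr_merge2: "merge (\<alpha> - \<beta>) \<beta> (x, y) = merge (\<alpha> - \<beta>) \<beta> (restrict x (\<alpha> - \<beta>), y)"
  unfolding merge_def by (auto simp: fun_eq_iff)

lemma set_ac: "(\<alpha> - \<beta>) \<union> (\<alpha> \<inter> \<beta>) = \<alpha>" by auto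
lemma set_ab: "(\<alpha> - \<beta>) \<union> \<beta> = \<alpha> \<union> \<beta>" by auto

lemma norm_mat_rs: "norm (M :: complex^'m::finite^'m) \<le> (\<Sum>i\<in>UNIV. rs M i)"
  unfolding rs_def by (rule norm_le_entries)

lemma mv_rs: "norm ((M :: complex^'m::finite^'m) *v v) \<le> (\<Sum>i\<in>UNIV. rs M i) * norm v"
  unfolding rs_def by (rule mv_bound)

context
  fixes A B :: "('n::finite, 'm::finite) coeffs" and p :: nat
    and u :: "('n \<Rightarrow> real) \<Rightarrow> complex^'m" and k :: "'n \<Rightarrow> real" and \<alpha> \<beta> :: "'n set"
  assumes p: "p > 0" and cA: "\<forall>\<alpha>. cc p \<alpha> (A \<alpha>)" and cB: "\<forall>\<alpha>. cc p \<alpha> (B \<alpha>)"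
    and um: "u \<in> borel_measurable (cube UNIV)" and k: "k \<in> space (cube UNIV)"
    and good: "integrable (cube (\<alpha> \<union> \<beta>)) (\<lambda>z. u (merge_pt (\<alpha> \<union> \<beta>) k z))"
begin

lemma V_meas: "(\<lambda>z. u (merge_pt (\<alpha> \<union> \<beta>) k z)) \<in> borel_measurable (cube (\<alpha> \<union> \<beta>))"
  using good by auto

lemma A_meas: "(\<lambda>x. A \<alpha> k x) \<in> borel_measurable (cube \<alpha>)"
  using coeff_meas_comp[where A=A and \<alpha>=\<alpha> and p=p, OF p cA[rule_format] measurable_const[OF k] measurable_ident] by simp

lemma B_meas: "(\<lambda>xy. B \<beta> (merge_pt \<alpha> k (fst xy)) (snd xy)) \<in> borel_measurable (cube \<alpha> \<Otimes>\<^sub>M cube \<beta>)"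
proof -
  have f: "(\<lambda>xy. merge_pt \<alpha> k (fst xy)) \<in> measurable (cube \<alpha> \<Otimes>\<^sub>M cube \<beta>) (cube UNIV)"
    using measurable_comp[OF measurable_fst mpk_meas[OF k]] by (simp add: comp_def)
  show ?thesis
    using coeff_meas_comp[where A=B and \<alpha>=\<beta> and p=p, OF p cB[rule_format] f measurable_snd] by simp
qed

lemma T_meas: "(\<lambda>x. Top B \<beta> u (merge_pt \<alpha> k x)) \<in> borel_measurable (cube \<alpha>)"
  using measurable_comp[OF mpk_meas[OF k] Top_meas[where A=B and \<alpha>=\<beta> and p=p, OF p cB[rule_format] um]]
  by (simp add: comp_def)

lemma F_meas: "(\<lambda>x. A \<alpha> k x *v Top B \<beta> u (merge_pt \<alpha> k x)) \<in> borel_measurable (cube \<alpha>)"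
  using borel_measurable_continuous_Pair[OF A_meas T_meas mv_cont] by simp

lemma Mx_meas: "(\<lambda>xy. A \<alpha> k (fst xy) ** B \<beta> (merge_pt \<alpha> k (fst xy)) (snd xy)) \<in> borel_measurable (cube \<alpha> \<Otimes>\<^sub>M cube \<beta>)"
proof -
  have "(\<lambda>xy. A \<alpha> k (fst xy)) \<in> borel_measurable (cube \<alpha> \<Otimes>\<^sub>M cube \<beta>)"
    using measurable_comp[OF measurable_fst A_meas] by (simp add: comp_def)
  then show ?thesis using borel_measurable_continuous_Pair[OF _ B_meas mm_cont] by simp
qed

lemma merge_ac_meas:
  "(\<lambda>zw. merge (\<alpha> - \<beta>) (\<alpha> \<inter> \<beta>) (fst zw, snd zw)) \<in> measurable (cube (\<alpha> \<union> \<beta>) \<Otimes>\<^sub>M cube (\<alpha> \<inter> \<beta>)) (cube \<alpha>)"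
proof -
  have r: "(\<lambda>zw. (restrict (fst zw) (\<alpha> - \<beta>), snd zw)) \<in> measurable (cube (\<alpha> \<union> \<beta>) \<Otimes>\<^sub>M cube (\<alpha> \<inter> \<beta>)) (cube (\<alpha> - \<beta>) \<Otimes>\<^sub>M cube (\<alpha> \<inter> \<beta>))"
    by (intro measurable_Pair measurable_comp[OF measurable_fst cube_meas_restrict, unfolded comp_def] measurable_snd) auto
  have "(\<lambda>zw. merge (\<alpha> - \<beta>) (\<alpha> \<inter> \<beta>) (restrict (fst zw) (\<alpha> - \<beta>), snd zw)) \<in> measurable (cube (\<alpha> \<union> \<beta>) \<Otimes>\<^sub>M cube (\<alpha> \<inter> \<beta>)) (cube \<alpha>)"
    using measurable_comp[OF r cube_meas_merge[of "\<alpha> - \<beta>" "\<alpha> \<inter> \<beta>"]] by (simp add: comp_def set_ac)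
  then show ?thesis by (subst id_restr_merge) simp
qed

lemma Cp_meas: "(\<lambda>z. Cp A B \<alpha> \<beta> k z) \<in> borel_measurable (cube (\<alpha> \<union> \<beta>))"
proof -
  interpret Cc: prob_space "cube (\<alpha> \<inter> \<beta>)" by (rule cube_prob)
  have m1: "(\<lambda>zw. (merge (\<alpha> - \<beta>) (\<alpha> \<inter> \<beta>) (fst zw, snd zw), restrict (fst zw) \<beta>)) \<in> measurable (cube (\<alpha> \<union> \<beta>) \<Otimes>\<^sub>M cube (\<alpha> \<inter> \<beta>)) (cube \<alpha> \<Otimes>\<^sub>M cube \<beta>)"
    by (intro measurable_Pair merge_ac_meas measurable_comp[OF measurable_fst cube_meas_restrict, unfolded comp_def]) auto
  have "(\<lambda>zw. A \<alpha> k (merge (\<alpha> - \<beta>) (\<alpha> \<inter> \<beta>) (fst zw, snd zw)) ** B \<beta> (merge_pt \<alpha> k (merge (\<alpha> - \<beta>) (\<alpha> \<inter> \<beta>) (fst zw, snd zw))) (restrict (fst zw) \<beta>))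
        \<in> borel_measurable (cube (\<alpha> \<union> \<beta>) \<Otimes>\<^sub>M cube (\<alpha> \<inter> \<beta>))"
    using measurable_comp[OF m1 Mx_meas] by (simp add: comp_def)
  then show ?thesis unfolding Cp_def
    by (intro Cc.borel_measurable_lebesgue_integral) (simp add: split_beta')
qed

lemma merge_ab_meas:
  "(\<lambda>xy. merge (\<alpha> - \<beta>) \<beta> (fst xy, snd xy)) \<in> measurable (cube \<alpha> \<Otimes>\<^sub>M cube \<beta>) (cube (\<alpha> \<union> \<beta>))"
proof -
  have r: "(\<lambda>xy. (restrict (fst xy) (\<alpha> - \<beta>), snd xy)) \<in> measurable (cube \<alpha> \<Otimes>\<^sub>M cube \<beta>) (cube (\<alpha> - \<beta>) \<Otimes>\<^sub>M cube \<beta>)"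
    by (intro measurable_Pair measurable_comp[OF measurable_fst cube_meas_restrict, unfolded comp_def] measurable_snd) auto
  have "(\<lambda>xy. merge (\<alpha> - \<beta>) \<beta> (restrict (fst xy) (\<alpha> - \<beta>), snd xy)) \<in> measurable (cube \<alpha> \<Otimes>\<^sub>M cube \<beta>) (cube (\<alpha> \<union> \<beta>))"
    using measurable_comp[OF r cube_meas_merge[of "\<alpha> - \<beta>" \<beta>]] by (simp add: comp_def set_ab)
  then show ?thesis by (subst id_restr_merge2) simp
qed

definition "cAv = real CARD('m) * mx A \<alpha>"
definition "cBv = real CARD('m) * mx B \<beta>"

lemma cAv0: "cAv \<ge> 0" unfolding cAv_def using mx_nonneg[OF p cA] by simp
lemma cBv0: "cBv \<ge> 0" unfolding cBv_def using mx_nonneg[OF p cB] by simp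

lemma bndA: "x \<in> space (cube \<alpha>) \<Longrightarrow> norm (A \<alpha> k x *v v) \<le> cAv * norm v"
  unfolding cAv_def by (rule mv_bound_dom[OF p cA space_dom[OF k]])

lemma bndB: "x \<in> space (cube \<alpha>) \<Longrightarrow> y \<in> space (cube \<beta>) \<Longrightarrow> norm (B \<beta> (merge_pt \<alpha> k x) y *v v) \<le> cBv * norm v"
  unfolding cBv_def by (rule mv_bound_dom[OF p cB space_dom[OF space_mpk[OF k]]])

lemma bndMx: "x \<in> space (cube \<alpha>) \<Longrightarrow> y \<in> space (cube \<beta>) \<Longrightarrow>
    norm ((A \<alpha> k x ** B \<beta> (merge_pt \<alpha> k x) y) *v v) \<le> cAv * cBv * norm v"
proof -
  assume x: "x \<in> space (cube \<alpha>)" and y: "y \<in> space (cube \<beta>)"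
  have "norm ((A \<alpha> k x ** B \<beta> (merge_pt \<alpha> k x) y) *v v) = norm (A \<alpha> k x *v (B \<beta> (merge_pt \<alpha> k x) y *v v))"
    by (simp add: matrix_vector_mul_assoc)
  also have "\<dots> \<le> cAv * norm (B \<beta> (merge_pt \<alpha> k x) y *v v)" by (rule bndA[OF x])
  also have "\<dots> \<le> cAv * (cBv * norm v)" by (intro mult_left_mono bndB[OF x y] cAv0)
  finally show ?thesis by (simp add: mult.assoc)
qed

lemma bndMxnorm: "x \<in> space (cube \<alpha>) \<Longrightarrow> y \<in> space (cube \<beta>) \<Longrightarrow>
    norm (A \<alpha> k x ** B \<beta> (merge_pt \<alpha> k x) y) \<le> real CARD('m) * mx A \<alpha> * mx B \<beta>"
proof -
  assume x: "x \<in> space (cube \<alpha>)" and y: "y \<in> space (cube \<beta>)"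
  have "norm (A \<alpha> k x ** B \<beta> (merge_pt \<alpha> k x) y) \<le> (\<Sum>i\<in>UNIV. rs (A \<alpha> k x ** B \<beta> (merge_pt \<alpha> k x) y) i)"
    by (rule norm_mat_rs)
  also have "\<dots> \<le> (\<Sum>i\<in>(UNIV::'m set). mx A \<alpha> * mx B \<beta>)"
  proof (intro sum_mono)
    fix i
    have "rs (A \<alpha> k x ** B \<beta> (merge_pt \<alpha> k x) y) i \<le> rs (A \<alpha> k x) i * mx B \<beta>"
      by (rule rs_mult) (use mx_ge[OF p cB space_dom[OF space_mpk[OF k x] y]] in \<open>simp add: rs_def rsum_def\<close>)
    also have "\<dots> \<le> mx A \<alpha> * mx B \<beta>"
      using mx_ge[OF p cA space_dom[OF k x]] mx_nonneg[OF p cB] by (intro mult_right_mono) (auto simp: rs_def rsum_def)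
    finally show "rs (A \<alpha> k x ** B \<beta> (merge_pt \<alpha> k x) y) i \<le> mx A \<alpha> * mx B \<beta>" .
  qed
  finally show ?thesis by simp
qed

lemma bndCp: "z \<in> space (cube (\<alpha> \<union> \<beta>)) \<Longrightarrow> norm (Cp A B \<alpha> \<beta> k z *v v) \<le> real CARD('m) * mx A \<alpha> * mx B \<beta> * norm v"
proof -
  assume z: "z \<in> space (cube (\<alpha> \<union> \<beta>))"
  have "norm (Cp A B \<alpha> \<beta> k z *v v) \<le> (\<Sum>i\<in>UNIV. rs (Cp A B \<alpha> \<beta> k z) i) * norm v" by (rule mv_rs)
  also have "\<dots> \<le> (\<Sum>i\<in>(UNIV::'m set). mx A \<alpha> * mx B \<beta>) * norm v"
    by (intro mult_right_mono sum_mono rs_Cp[OF p cA cB refl space_dom[OF k z]]) auto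
  finally show ?thesis by simp
qed

lemma I4: "integrable (cube (\<alpha> \<union> \<beta>)) (\<lambda>z. Cp A B \<alpha> \<beta> k z *v u (merge_pt (\<alpha> \<union> \<beta>) k z))"
proof (rule Bochner_Integration.integrable_bound[where f="\<lambda>z. real CARD('m) * mx A \<alpha> * mx B \<beta> * norm (u (merge_pt (\<alpha> \<union> \<beta>) k z))"])
  show "integrable (cube (\<alpha> \<union> \<beta>)) (\<lambda>z. real CARD('m) * mx A \<alpha> * mx B \<beta> * norm (u (merge_pt (\<alpha> \<union> \<beta>) k z)))"
    using good by simp
  show "(\<lambda>z. Cp A B \<alpha> \<beta> k z *v u (merge_pt (\<alpha> \<union> \<beta>) k z)) \<in> borel_measurable (cube (\<alpha> \<union> \<beta>))"
    using borel_measurable_continuous_Pair[OF Cp_meas V_meas mv_cont] by simp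
  show "AE z in cube (\<alpha> \<union> \<beta>). norm (Cp A B \<alpha> \<beta> k z *v u (merge_pt (\<alpha> \<union> \<beta>) k z))
      \<le> norm (real CARD('m) * mx A \<alpha> * mx B \<beta> * norm (u (merge_pt (\<alpha> \<union> \<beta>) k z)))"
    using bndCp mx_nonneg[OF p cA] mx_nonneg[OF p cB] by (intro AE_I2) (auto intro: order_trans)
qed

lemma W_integrable: "integrable (cube (\<alpha> - \<beta>) \<Otimes>\<^sub>M cube \<beta>) (\<lambda>xy. u (merge_pt (\<alpha> \<union> \<beta>) k (merge (\<alpha> - \<beta>) \<beta> xy)))"
  using cube_fold_integrable[of "\<alpha> - \<beta>" \<beta> "\<lambda>z. u (merge_pt (\<alpha> \<union> \<beta>) k z)"] good by (simp add: set_ab Diff_Int_distrib2)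

lemma good_x1: "AE x1 in cube (\<alpha> - \<beta>). integrable (cube \<beta>) (\<lambda>y. u (merge_pt (\<alpha> \<union> \<beta>) k (merge (\<alpha> - \<beta>) \<beta> (x1, y))))"
proof -
  interpret P: pair_sigma_finite "cube (\<alpha> - \<beta>)" "cube \<beta>" by (rule psf_cube)
  show ?thesis using P.AE_integrable_fst'[OF W_integrable] by simp
qed

lemma G_meas: "(\<lambda>x. \<integral>\<^sup>+y. ennreal (norm (u (merge_pt (\<alpha> \<union> \<beta>) k (merge (\<alpha> - \<beta>) \<beta> (x, y))))) \<partial>cube \<beta>) \<in> borel_measurable (cube \<alpha>)"
proof -
  interpret Cb: prob_space "cube \<beta>" by (rule cube_prob)
  have "(\<lambda>xy. u (merge_pt (\<alpha> \<union> \<beta>) k (merge (\<alpha> - \<beta>) \<beta> (fst xy, snd xy)))) \<in> borel_measurable (cube \<alpha> \<Otimes>\<^sub>M cube \<beta>)"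
    using measurable_comp[OF merge_ab_meas V_meas] by (simp add: comp_def)
  then have "(\<lambda>xy. ennreal (norm (u (merge_pt (\<alpha> \<union> \<beta>) k (merge (\<alpha> - \<beta>) \<beta> (fst xy, snd xy)))))) \<in> borel_measurable (cube \<alpha> \<Otimes>\<^sub>M cube \<beta>)"
    by measurable
  then show ?thesis
    using Cb.borel_measurable_nn_integral[of "\<lambda>x y. ennreal (norm (u (merge_pt (\<alpha> \<union> \<beta>) k (merge (\<alpha> - \<beta>) \<beta> (x, y)))))" "cube \<alpha>"]
    by (simp add: split_beta')
qed

lemma G_int: "(\<integral>\<^sup>+x. (\<integral>\<^sup>+y. ennreal (norm (u (merge_pt (\<alpha> \<union> \<beta>) k (merge (\<alpha> - \<beta>) \<beta> (x, y))))) \<partial>cube \<beta>) \<partial>cube \<alpha>)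
   = (\<integral>\<^sup>+z. ennreal (norm (u (merge_pt (\<alpha> \<union> \<beta>) k z))) \<partial>cube (\<alpha> \<union> \<beta>))"
proof -
  interpret Cc: prob_space "cube (\<alpha> \<inter> \<beta>)" by (rule cube_prob)
  let ?G = "\<lambda>x. \<integral>\<^sup>+y. ennreal (norm (u (merge_pt (\<alpha> \<union> \<beta>) k (merge (\<alpha> - \<beta>) \<beta> (x, y))))) \<partial>cube \<beta>"
  have d1: "(\<alpha> - \<beta>) \<inter> (\<alpha> \<inter> \<beta>) = {}" by auto
  have d2: "(\<alpha> - \<beta>) \<inter> \<beta> = {}" by auto
  have Gm: "?G \<in> borel_measurable (cube ((\<alpha> - \<beta>) \<union> (\<alpha> \<inter> \<beta>)))" using G_meas by (simp add: set_ac)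
  have Vm: "(\<lambda>z. ennreal (norm (u (merge_pt (\<alpha> \<union> \<beta>) k z)))) \<in> borel_measurable (cube ((\<alpha> - \<beta>) \<union> \<beta>))"
    using V_meas by (simp add: set_ab)
  have "(\<integral>\<^sup>+x. ?G x \<partial>cube \<alpha>) = (\<integral>\<^sup>+x. ?G x \<partial>cube ((\<alpha> - \<beta>) \<union> (\<alpha> \<inter> \<beta>)))" by (simp add: set_ac)
  also have "\<dots> = (\<integral>\<^sup>+x1. (\<integral>\<^sup>+w. ?G (merge (\<alpha> - \<beta>) (\<alpha> \<inter> \<beta>) (x1, w)) \<partial>cube (\<alpha> \<inter> \<beta>)) \<partial>cube (\<alpha> - \<beta>))"
    by (rule cube_fold_nn[OF d1 Gm])
  also have "\<dots> = (\<integral>\<^sup>+x1. (\<integral>\<^sup>+y. ennreal (norm (u (merge_pt (\<alpha> \<union> \<beta>) k (merge (\<alpha> - \<beta>) \<beta> (x1, y))))) \<partial>cube \<beta>) \<partial>cube (\<alpha> - \<beta>))"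
    by (simp add: id_mm Cc.emeasure_space_1)
  also have "\<dots> = (\<integral>\<^sup>+z. ennreal (norm (u (merge_pt (\<alpha> \<union> \<beta>) k z))) \<partial>cube ((\<alpha> - \<beta>) \<union> \<beta>))"
    by (rule cube_fold_nn[OF d2 Vm, symmetric])
  finally show ?thesis by (simp add: set_ab)
qed

lemma I1: "integrable (cube \<alpha>) (\<lambda>x. A \<alpha> k x *v Top B \<beta> u (merge_pt \<alpha> k x))"
  unfolding integrable_iff_bounded
proof (intro conjI F_meas)
  let ?G = "\<lambda>x. \<integral>\<^sup>+y. ennreal (norm (u (merge_pt (\<alpha> \<union> \<beta>) k (merge (\<alpha> - \<beta>) \<beta> (x, y))))) \<partial>cube \<beta>"
  have pw: "ennreal (norm (A \<alpha> k x *v Top B \<beta> u (merge_pt \<alpha> k x))) \<le> ennreal (cAv * cBv) * ?G x"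
    if x: "x \<in> space (cube \<alpha>)" for x
  proof -
    have "ennreal (norm (A \<alpha> k x *v Top B \<beta> u (merge_pt \<alpha> k x))) \<le> ennreal (cAv * norm (Top B \<beta> u (merge_pt \<alpha> k x)))"
      by (intro ennreal_leI bndA[OF x])
    also have "\<dots> = ennreal cAv * ennreal (norm (Top B \<beta> u (merge_pt \<alpha> k x)))"
      using cAv0 by (simp add: ennreal_mult)
    also have "\<dots> \<le> ennreal cAv * (ennreal cBv * (\<integral>\<^sup>+y. ennreal (norm (u (merge_pt \<beta> (merge_pt \<alpha> k x) y))) \<partial>cube \<beta>))"
    proof (intro mult_left_mono)
      show "ennreal (norm (Top B \<beta> u (merge_pt \<alpha> k x))) \<le> ennreal cBv * (\<integral>\<^sup>+y. ennreal (norm (u (merge_pt \<beta> (merge_pt \<alpha> k x) y))) \<partial>cube \<beta>)"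
        unfolding cBv_def by (rule Top_bound1[OF p cB um space_mpk[OF k x]])
    qed simp
    also have "\<dots> = ennreal (cAv * cBv) * ?G x"
      using cAv0 cBv0 by (simp add: id_mpk ennreal_mult mult.assoc)
    finally show ?thesis .
  qed
  have "(\<integral>\<^sup>+x. ennreal (norm (A \<alpha> k x *v Top B \<beta> u (merge_pt \<alpha> k x))) \<partial>cube \<alpha>) \<le> (\<integral>\<^sup>+x. ennreal (cAv * cBv) * ?G x \<partial>cube \<alpha>)"
    by (intro nn_integral_mono pw)
  also have "\<dots> = ennreal (cAv * cBv) * (\<integral>\<^sup>+x. ?G x \<partial>cube \<alpha>)"
    by (rule nn_integral_cmult[OF G_meas])
  also have "\<dots> = ennreal (cAv * cBv) * (\<integral>\<^sup>+z. ennreal (norm (u (merge_pt (\<alpha> \<union> \<beta>) k z))) \<partial>cube (\<alpha> \<union> \<beta>))"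
    by (simp add: G_int)
  also have "\<dots> < \<infinity>" using good unfolding integrable_iff_bounded by (simp add: ennreal_mult_less_top)
  finally show "(\<integral>\<^sup>+x. ennreal (norm (A \<alpha> k x *v Top B \<beta> u (merge_pt \<alpha> k x))) \<partial>cube \<alpha>) < \<infinity>" .
qed

lemma pair_eq:
  "(\<integral>x. A \<alpha> k x *v Top B \<beta> u (merge_pt \<alpha> k x) \<partial>cube \<alpha>) =
   (\<integral>z. Cp A B \<alpha> \<beta> k z *v u (merge_pt (\<alpha> \<union> \<beta>) k z) \<partial>cube (\<alpha> \<union> \<beta>))"
proof -
  let ?F = "\<lambda>x. A \<alpha> k x *v Top B \<beta> u (merge_pt \<alpha> k x)"
  let ?V = "\<lambda>z. u (merge_pt (\<alpha> \<union> \<beta>) k z)"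
  let ?R = "\<lambda>z. Cp A B \<alpha> \<beta> k z *v u (merge_pt (\<alpha> \<union> \<beta>) k z)"
  let ?xw = "\<lambda>x1 w. merge (\<alpha> - \<beta>) (\<alpha> \<inter> \<beta>) (x1, w)"
  let ?Mx = "\<lambda>x y. A \<alpha> k x ** B \<beta> (merge_pt \<alpha> k x) y"
  interpret Cc: prob_space "cube (\<alpha> \<inter> \<beta>)" by (rule cube_prob)
  interpret Cb: prob_space "cube \<beta>" by (rule cube_prob)
  interpret Ca: prob_space "cube (\<alpha> - \<beta>)" by (rule cube_prob)
  interpret P: pair_sigma_finite "cube (\<alpha> \<inter> \<beta>)" "cube \<beta>" by (rule psf_cube)
  have d1: "(\<alpha> - \<beta>) \<inter> (\<alpha> \<inter> \<beta>) = {}" by auto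
  have d2: "(\<alpha> - \<beta>) \<inter> \<beta> = {}" by auto
  have mac: "merge (\<alpha> - \<beta>) (\<alpha> \<inter> \<beta>) \<in> measurable (cube (\<alpha> - \<beta>) \<Otimes>\<^sub>M cube (\<alpha> \<inter> \<beta>)) (cube \<alpha>)"
    using cube_meas_merge[of "\<alpha> - \<beta>" "\<alpha> \<inter> \<beta>"] by (simp add: set_ac)
  have mab: "merge (\<alpha> - \<beta>) \<beta> \<in> measurable (cube (\<alpha> - \<beta>) \<Otimes>\<^sub>M cube \<beta>) (cube (\<alpha> \<union> \<beta>))"
    using cube_meas_merge[of "\<alpha> - \<beta>" \<beta>] by (simp add: set_ab)
  have Rm: "?R \<in> borel_measurable (cube (\<alpha> \<union> \<beta>))" using I4 by auto
  have a: "(\<integral>x. ?F x \<partial>cube \<alpha>) = (\<integral>x1. (\<integral>w. ?F (?xw x1 w) \<partial>cube (\<alpha> \<inter> \<beta>)) \<partial>cube (\<alpha> - \<beta>))"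
    using cube_fold_int[OF d1, of ?F] I1 by (simp add: set_ac)
  have f: "(\<integral>z. ?R z \<partial>cube (\<alpha> \<union> \<beta>)) = (\<integral>x1. (\<integral>y. ?R (merge (\<alpha> - \<beta>) \<beta> (x1, y)) \<partial>cube \<beta>) \<partial>cube (\<alpha> - \<beta>))"
    using cube_fold_int[OF d2, of ?R] I4 by (simp add: set_ab)
  have mL: "(\<lambda>x1. \<integral>w. ?F (?xw x1 w) \<partial>cube (\<alpha> \<inter> \<beta>)) \<in> borel_measurable (cube (\<alpha> - \<beta>))"
  proof -
    have "(\<lambda>xw. ?F (merge (\<alpha> - \<beta>) (\<alpha> \<inter> \<beta>) xw)) \<in> borel_measurable (cube (\<alpha> - \<beta>) \<Otimes>\<^sub>M cube (\<alpha> \<inter> \<beta>))"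
      using measurable_comp[OF mac F_meas] by (simp add: comp_def)
    then show ?thesis by (intro Cc.borel_measurable_lebesgue_integral) (simp add: split_beta')
  qed
  have mR: "(\<lambda>x1. \<integral>y. ?R (merge (\<alpha> - \<beta>) \<beta> (x1, y)) \<partial>cube \<beta>) \<in> borel_measurable (cube (\<alpha> - \<beta>))"
  proof -
    have "(\<lambda>xy. ?R (merge (\<alpha> - \<beta>) \<beta> xy)) \<in> borel_measurable (cube (\<alpha> - \<beta>) \<Otimes>\<^sub>M cube \<beta>)"
      using measurable_comp[OF mab Rm] by (simp add: comp_def)
    then show ?thesis by (intro Cb.borel_measurable_lebesgue_integral) (simp add: split_beta')
  qed
  have key: "AE x1 in cube (\<alpha> - \<beta>). (\<integral>w. ?F (?xw x1 w) \<partial>cube (\<alpha> \<inter> \<beta>)) = (\<integral>y. ?R (merge (\<alpha> - \<beta>) \<beta> (x1, y)) \<partial>cube \<beta>)"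
    using good_x1
  proof (rule AE_mp[OF _ AE_I2], intro impI)
    fix x1 assume x1: "x1 \<in> space (cube (\<alpha> - \<beta>))"
      and gx: "integrable (cube \<beta>) (\<lambda>y. ?V (merge (\<alpha> - \<beta>) \<beta> (x1, y)))"
    have xw_sp: "?xw x1 w \<in> space (cube \<alpha>)" if "w \<in> space (cube (\<alpha> \<inter> \<beta>))" for w
      using space_merge[OF x1 that] by (simp add: set_ac)
    have xw_m: "(\<lambda>w. ?xw x1 w) \<in> measurable (cube (\<alpha> \<inter> \<beta>)) (cube \<alpha>)"
      using measurable_Pair2[OF mac x1] by simp
    have gm: "(\<lambda>y. ?V (merge (\<alpha> - \<beta>) \<beta> (x1, y))) \<in> borel_measurable (cube \<beta>)" using gx by auto
    have Mxm: "(\<lambda>wy. ?Mx (?xw x1 (fst wy)) (snd wy)) \<in> borel_measurable (cube (\<alpha> \<inter> \<beta>) \<Otimes>\<^sub>M cube \<beta>)"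
    proof -
      have "(\<lambda>wy. (?xw x1 (fst wy), snd wy)) \<in> measurable (cube (\<alpha> \<inter> \<beta>) \<Otimes>\<^sub>M cube \<beta>) (cube \<alpha> \<Otimes>\<^sub>M cube \<beta>)"
        by (intro measurable_Pair measurable_comp[OF measurable_fst xw_m, unfolded comp_def] measurable_snd)
      from measurable_comp[OF this Mx_meas] show ?thesis by (simp add: comp_def)
    qed
    have b: "?F (?xw x1 w) = (\<integral>y. ?Mx (?xw x1 w) y *v ?V (merge (\<alpha> - \<beta>) \<beta> (x1, y)) \<partial>cube \<beta>)"
      if w: "w \<in> space (cube (\<alpha> \<inter> \<beta>))" for w
    proof -
      let ?x = "?xw x1 w"
      have x: "?x \<in> space (cube \<alpha>)" by (rule xw_sp[OF w])
      have T: "Top B \<beta> u (merge_pt \<alpha> k ?x) = (\<integral>y. B \<beta> (merge_pt \<alpha> k ?x) y *v ?V (merge (\<alpha> - \<beta>) \<beta> (x1, y)) \<partial>cube \<beta>)"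
        unfolding Top_def id_mpk id_mm ..
      have Bm: "(\<lambda>y. B \<beta> (merge_pt \<alpha> k ?x) y) \<in> borel_measurable (cube \<beta>)"
        using measurable_Pair2[OF B_meas x] by simp
      have Bi: "integrable (cube \<beta>) (\<lambda>y. B \<beta> (merge_pt \<alpha> k ?x) y *v ?V (merge (\<alpha> - \<beta>) \<beta> (x1, y)))"
      proof (rule Bochner_Integration.integrable_bound[where f="\<lambda>y. cBv * norm (?V (merge (\<alpha> - \<beta>) \<beta> (x1, y)))"])
        show "integrable (cube \<beta>) (\<lambda>y. cBv * norm (?V (merge (\<alpha> - \<beta>) \<beta> (x1, y))))" using gx by simp
        show "(\<lambda>y. B \<beta> (merge_pt \<alpha> k ?x) y *v ?V (merge (\<alpha> - \<beta>) \<beta> (x1, y))) \<in> borel_measurable (cube \<beta>)"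
          using borel_measurable_continuous_Pair[OF Bm gm mv_cont] by simp
        show "AE y in cube \<beta>. norm (B \<beta> (merge_pt \<alpha> k ?x) y *v ?V (merge (\<alpha> - \<beta>) \<beta> (x1, y))) \<le> norm (cBv * norm (?V (merge (\<alpha> - \<beta>) \<beta> (x1, y))))"
          using bndB[OF x] cBv0 by (intro AE_I2) (auto intro: order_trans)
      qed
      have "?F ?x = A \<alpha> k ?x *v (\<integral>y. B \<beta> (merge_pt \<alpha> k ?x) y *v ?V (merge (\<alpha> - \<beta>) \<beta> (x1, y)) \<partial>cube \<beta>)"
        by (simp only: T)
      also have "\<dots> = (\<integral>y. A \<alpha> k ?x *v (B \<beta> (merge_pt \<alpha> k ?x) y *v ?V (merge (\<alpha> - \<beta>) \<beta> (x1, y))) \<partial>cube \<beta>)"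
        by (rule integral_bounded_linear[OF bl_mv Bi, symmetric])
      also have "\<dots> = (\<integral>y. ?Mx ?x y *v ?V (merge (\<alpha> - \<beta>) \<beta> (x1, y)) \<partial>cube \<beta>)"
        by (simp add: matrix_vector_mul_assoc)
      finally show ?thesis .
    qed
    have I2: "integrable (cube (\<alpha> \<inter> \<beta>) \<Otimes>\<^sub>M cube \<beta>) (\<lambda>wy. ?Mx (?xw x1 (fst wy)) (snd wy) *v ?V (merge (\<alpha> - \<beta>) \<beta> (x1, snd wy)))"
    proof (rule Bochner_Integration.integrable_bound[where f="\<lambda>wy. cAv * cBv * norm (?V (merge (\<alpha> - \<beta>) \<beta> (x1, snd wy)))"])
      have gsm: "(\<lambda>wy. ?V (merge (\<alpha> - \<beta>) \<beta> (x1, snd wy))) \<in> borel_measurable (cube (\<alpha> \<inter> \<beta>) \<Otimes>\<^sub>M cube \<beta>)"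
        using measurable_comp[OF measurable_snd gm] by (simp add: comp_def)
      have "integrable (cube (\<alpha> \<inter> \<beta>) \<Otimes>\<^sub>M cube \<beta>) (\<lambda>wy. ?V (merge (\<alpha> - \<beta>) \<beta> (x1, snd wy)))"
        unfolding integrable_iff_bounded
      proof (intro conjI gsm)
        have "(\<integral>\<^sup>+wy. ennreal (norm (?V (merge (\<alpha> - \<beta>) \<beta> (x1, snd wy)))) \<partial>(cube (\<alpha> \<inter> \<beta>) \<Otimes>\<^sub>M cube \<beta>))
          = (\<integral>\<^sup>+w. (\<integral>\<^sup>+y. ennreal (norm (?V (merge (\<alpha> - \<beta>) \<beta> (x1, y)))) \<partial>cube \<beta>) \<partial>cube (\<alpha> \<inter> \<beta>))"
          using gsm by (subst Cb.nn_integral_fst[symmetric]) (auto simp: split_beta')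
        also have "\<dots> = (\<integral>\<^sup>+y. ennreal (norm (?V (merge (\<alpha> - \<beta>) \<beta> (x1, y)))) \<partial>cube \<beta>)"
          by (simp add: Cc.emeasure_space_1)
        also have "\<dots> < \<infinity>" using gx unfolding integrable_iff_bounded by simp
        finally show "(\<integral>\<^sup>+wy. ennreal (norm (?V (merge (\<alpha> - \<beta>) \<beta> (x1, snd wy)))) \<partial>(cube (\<alpha> \<inter> \<beta>) \<Otimes>\<^sub>M cube \<beta>)) < \<infinity>" .
      qed
      then show "integrable (cube (\<alpha> \<inter> \<beta>) \<Otimes>\<^sub>M cube \<beta>) (\<lambda>wy. cAv * cBv * norm (?V (merge (\<alpha> - \<beta>) \<beta> (x1, snd wy))))"
        by simp
      show "(\<lambda>wy. ?Mx (?xw x1 (fst wy)) (snd wy) *v ?V (merge (\<alpha> - \<beta>) \<beta> (x1, snd wy))) \<in> borel_measurable (cube (\<alpha> \<inter> \<beta>) \<Otimes>\<^sub>M cube \<beta>)"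
        using borel_measurable_continuous_Pair[OF Mxm gsm mv_cont] by simp
      show "AE wy in cube (\<alpha> \<inter> \<beta>) \<Otimes>\<^sub>M cube \<beta>. norm (?Mx (?xw x1 (fst wy)) (snd wy) *v ?V (merge (\<alpha> - \<beta>) \<beta> (x1, snd wy)))
          \<le> norm (cAv * cBv * norm (?V (merge (\<alpha> - \<beta>) \<beta> (x1, snd wy))))"
      proof (intro AE_I2)
        fix wy assume "wy \<in> space (cube (\<alpha> \<inter> \<beta>) \<Otimes>\<^sub>M cube \<beta>)"
        then have w: "fst wy \<in> space (cube (\<alpha> \<inter> \<beta>))" and y: "snd wy \<in> space (cube \<beta>)"
          by (auto simp: space_pair_measure)
        show "norm (?Mx (?xw x1 (fst wy)) (snd wy) *v ?V (merge (\<alpha> - \<beta>) \<beta> (x1, snd wy)))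
          \<le> norm (cAv * cBv * norm (?V (merge (\<alpha> - \<beta>) \<beta> (x1, snd wy))))"
          using bndMx[OF xw_sp[OF w] y] cAv0 cBv0 by (auto intro: order_trans)
      qed
    qed
    have "(\<integral>w. ?F (?xw x1 w) \<partial>cube (\<alpha> \<inter> \<beta>)) =
          (\<integral>w. (\<integral>y. ?Mx (?xw x1 w) y *v ?V (merge (\<alpha> - \<beta>) \<beta> (x1, y)) \<partial>cube \<beta>) \<partial>cube (\<alpha> \<inter> \<beta>))"
      by (rule Bochner_Integration.integral_cong[OF refl b])
    also have "\<dots> = (\<integral>y. (\<integral>w. ?Mx (?xw x1 w) y *v ?V (merge (\<alpha> - \<beta>) \<beta> (x1, y)) \<partial>cube (\<alpha> \<inter> \<beta>)) \<partial>cube \<beta>)"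
      by (rule P.Fubini_integral[symmetric]) (use I2 in \<open>simp add: split_beta'\<close>)
    also have "\<dots> = (\<integral>y. ?R (merge (\<alpha> - \<beta>) \<beta> (x1, y)) \<partial>cube \<beta>)"
    proof (rule Bochner_Integration.integral_cong[OF refl])
      fix y assume y: "y \<in> space (cube \<beta>)"
      have Mi: "integrable (cube (\<alpha> \<inter> \<beta>)) (\<lambda>w. ?Mx (?xw x1 w) y)"
      proof (rule Cc.integrable_const_bound[where B="real CARD('m) * mx A \<alpha> * mx B \<beta>"])
        show "AE w in cube (\<alpha> \<inter> \<beta>). norm (?Mx (?xw x1 w) y) \<le> real CARD('m) * mx A \<alpha> * mx B \<beta>"
          using bndMxnorm[OF xw_sp y] by (intro AE_I2) auto
        show "(\<lambda>w. ?Mx (?xw x1 w) y) \<in> borel_measurable (cube (\<alpha> \<inter> \<beta>))"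
          using measurable_Pair1[OF Mxm y] by simp
      qed
      have "(\<integral>w. ?Mx (?xw x1 w) y *v ?V (merge (\<alpha> - \<beta>) \<beta> (x1, y)) \<partial>cube (\<alpha> \<inter> \<beta>))
          = (\<integral>w. ?Mx (?xw x1 w) y \<partial>cube (\<alpha> \<inter> \<beta>)) *v ?V (merge (\<alpha> - \<beta>) \<beta> (x1, y))"
        by (rule integral_bounded_linear[OF bl_mv_left Mi])
      also have "(\<integral>w. ?Mx (?xw x1 w) y \<partial>cube (\<alpha> \<inter> \<beta>)) = Cp A B \<alpha> \<beta> k (merge (\<alpha> - \<beta>) \<beta> (x1, y))"
        unfolding Cp_def id_mm2 id_restr[OF y] ..
      finally show "(\<integral>w. ?Mx (?xw x1 w) y *v ?V (merge (\<alpha> - \<beta>) \<beta> (x1, y)) \<partial>cube (\<alpha> \<inter> \<beta>)) = ?R (merge (\<alpha> - \<beta>) \<beta> (x1, y))" .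
    qed
    finally show "(\<integral>w. ?F (?xw x1 w) \<partial>cube (\<alpha> \<inter> \<beta>)) = (\<integral>y. ?R (merge (\<alpha> - \<beta>) \<beta> (x1, y)) \<partial>cube \<beta>)" .
  qed
  show ?thesis using a f integral_cong_AE[OF mL mR key] by simp
qed

end

lemma mv_sum_right: "(M :: complex^'m::finite^'m) *v (\<Sum>i\<in>I. f i) = (\<Sum>i\<in>I. M *v f i)"
  by (induction I rule: infinite_finite_induct) (simp_all add: matrix_vector_right_distrib)

lemma mv_sum_left: "(\<Sum>i\<in>I. f i) *v (v :: complex^'m::finite) = (\<Sum>i\<in>I. (f i :: complex^'m^'m) *v v)"
proof (induction I rule: infinite_finite_induct)
  case (insert x F)
  have "(f x + (\<Sum>i\<in>F. f i)) *v v = f x *v v + (\<Sum>i\<in>F. f i) *v v"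
    by (simp add: vec_eq_iff matrix_vector_mult_def sum.distrib algebra_simps)
  then show ?case using insert by simp
qed auto

lemma comp_pointwise:
  fixes A B :: "('n::finite, 'm::finite) coeffs"
  assumes p: "p > 0" and cA: "\<forall>\<alpha>. cc p \<alpha> (A \<alpha>)" and cB: "\<forall>\<alpha>. cc p \<alpha> (B \<alpha>)"
    and um: "u \<in> borel_measurable (cube UNIV)" and k: "k \<in> space (cube UNIV)"
    and good: "\<forall>\<gamma>. integrable (cube \<gamma>) (\<lambda>z. u (merge_pt \<gamma> k z))"
  shows "opL (compC A B) u k = opL A (opL B u) k"
proof -
  let ?P = "\<lambda>\<alpha> \<beta>. (\<integral>z. Cp A B \<alpha> \<beta> k z *v u (merge_pt (\<alpha> \<union> \<beta>) k z) \<partial>cube (\<alpha> \<union> \<beta>))"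
  have "opL A (opL B u) k = (\<Sum>\<alpha>\<in>UNIV. \<integral>x. A \<alpha> k x *v (\<Sum>\<beta>\<in>UNIV. Top B \<beta> u (merge_pt \<alpha> k x)) \<partial>cube \<alpha>)"
    unfolding opL_Top Top_def[of A] ..
  also have "\<dots> = (\<Sum>\<alpha>\<in>UNIV. \<Sum>\<beta>\<in>UNIV. \<integral>x. A \<alpha> k x *v Top B \<beta> u (merge_pt \<alpha> k x) \<partial>cube \<alpha>)"
  proof (rule sum.cong[OF refl])
    fix \<alpha> :: "'n set"
    have "(\<integral>x. A \<alpha> k x *v (\<Sum>\<beta>\<in>UNIV. Top B \<beta> u (merge_pt \<alpha> k x)) \<partial>cube \<alpha>) = (\<integral>x. (\<Sum>\<beta>\<in>UNIV. A \<alpha> k x *v Top B \<beta> u (merge_pt \<alpha> k x)) \<partial>cube \<alpha>)"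
      by (simp add: mv_sum_right)
    also have "\<dots> = (\<Sum>\<beta>\<in>UNIV. \<integral>x. A \<alpha> k x *v Top B \<beta> u (merge_pt \<alpha> k x) \<partial>cube \<alpha>)"
      by (rule Bochner_Integration.integral_sum) (use I1[OF p cA cB um k] good in blast)
    finally show "(\<integral>x. A \<alpha> k x *v (\<Sum>\<beta>\<in>UNIV. Top B \<beta> u (merge_pt \<alpha> k x)) \<partial>cube \<alpha>) = (\<Sum>\<beta>\<in>UNIV. \<integral>x. A \<alpha> k x *v Top B \<beta> u (merge_pt \<alpha> k x) \<partial>cube \<alpha>)" .
  qed
  also have "\<dots> = (\<Sum>\<alpha>\<in>UNIV. \<Sum>\<beta>\<in>UNIV. ?P \<alpha> \<beta>)"
    using pair_eq[OF p cA cB um k] good by simp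
  also have "\<dots> = (\<Sum>ab\<in>UNIV. ?P (fst ab) (snd ab))"
    unfolding UNIV_Times_UNIV[symmetric] sum.cartesian_product by (simp add: case_prod_beta)
  also have "\<dots> = (\<Sum>\<gamma>\<in>UNIV. \<Sum>ab\<in>{ab. fst ab \<union> snd ab = \<gamma>}. ?P (fst ab) (snd ab))"
    using sum.group[of UNIV UNIV "\<lambda>ab::'n set \<times> 'n set. fst ab \<union> snd ab" "\<lambda>ab. ?P (fst ab) (snd ab)"]
    by simp
  also have "\<dots> = (\<Sum>\<gamma>\<in>UNIV. Top (compC A B) \<gamma> u k)"
  proof (rule sum.cong[OF refl])
    fix \<gamma> :: "'n set"
    have "(\<Sum>ab\<in>{ab. fst ab \<union> snd ab = \<gamma>}. ?P (fst ab) (snd ab))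
        = (\<Sum>ab\<in>{ab. fst ab \<union> snd ab = \<gamma>}. \<integral>z. Cp A B (fst ab) (snd ab) k z *v u (merge_pt \<gamma> k z) \<partial>cube \<gamma>)"
      by (rule sum.cong) auto
    also have "\<dots> = (\<integral>z. (\<Sum>ab\<in>{ab. fst ab \<union> snd ab = \<gamma>}. Cp A B (fst ab) (snd ab) k z *v u (merge_pt \<gamma> k z)) \<partial>cube \<gamma>)"
    proof (rule Bochner_Integration.integral_sum[symmetric])
      fix ab :: "'n set \<times> 'n set" assume "ab \<in> {ab. fst ab \<union> snd ab = \<gamma>}"
      then have g: "fst ab \<union> snd ab = \<gamma>" by simp
      show "integrable (cube \<gamma>) (\<lambda>z. Cp A B (fst ab) (snd ab) k z *v u (merge_pt \<gamma> k z))"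
        using I4[OF p cA cB um k, of "fst ab" "snd ab"] good g by simp
    qed
    also have "\<dots> = Top (compC A B) \<gamma> u k"
      unfolding Top_def compC_def by (simp add: mv_sum_left)
    finally show "(\<Sum>ab\<in>{ab. fst ab \<union> snd ab = \<gamma>}. ?P (fst ab) (snd ab)) = Top (compC A B) \<gamma> u k" .
  qed
  also have "\<dots> = opL (compC A B) u k" unfolding opL_Top ..
  finally show ?thesis ..
qed

lemma part_comp:
  fixes A B :: "('n::finite, 'm::finite) coeffs"
  assumes p: "p > 0" and A: "is_coeffs p A" and B: "is_coeffs p B"
  shows "\<exists>C. is_coeffs p C \<and> (\<forall>u. isL2 u \<longrightarrow> (AE k in cube UNIV. opL C u k = opL A (opL B u) k)) \<and>
             normL C \<le> normL A * normL B"
proof (intro exI conjI allI impI)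
  have cA: "\<forall>\<alpha>. cc p \<alpha> (A \<alpha>)" and cB: "\<forall>\<alpha>. cc p \<alpha> (B \<alpha>)" using A B is_coeffs_iff[OF p] by auto
  show "is_coeffs p (compC A B)" using cc_compC[OF cA cB] is_coeffs_iff[OF p] by blast
  show "normL (compC A B) \<le> normL A * normL B" by (rule normL_compC[OF p cA cB])
  fix u :: "('n \<Rightarrow> real) \<Rightarrow> complex^'m" assume u: "isL2 u"
  have um: "u \<in> borel_measurable (cube UNIV)" using u unfolding isL2_def by auto
  have "AE k in cube UNIV. \<forall>\<gamma>\<in>UNIV. integrable (cube \<gamma>) (\<lambda>z. u (merge_pt \<gamma> k z))"
    using AE_good[OF L2_L1[OF u]] by (subst AE_finite_all) auto
  then show "AE k in cube UNIV. opL (compC A B) u k = opL A (opL B u) k"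
  proof (rule AE_mp[OF _ AE_I2], intro impI)
    fix k assume "k \<in> space (cube UNIV)" "\<forall>\<gamma>\<in>UNIV. integrable (cube \<gamma>) (\<lambda>z. u (merge_pt \<gamma> k z))"
    then show "opL (compC A B) u k = opL A (opL B u) k" using comp_pointwise[OF p cA cB um] by blast
  qed
qed

lemma zero_dir:
  fixes A :: "('n::finite, 'm::finite) coeffs"
  assumes p: "p > 0" and cA: "\<forall>\<alpha>. cc p \<alpha> (A \<alpha>)" and z: "normL A = 0"
  shows "AE k in cube UNIV. opL A u k = 0"
proof (rule AE_I2)
  fix k :: "'n \<Rightarrow> real" assume k: "k \<in> space (cube UNIV)"
  have mx0: "mx A \<alpha> = 0" for \<alpha>
    using z mx_nonneg[OF p cA] unfolding normL_mx by (simp add: sum_nonneg_eq_0_iff)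
  have "Top A \<alpha> u k = 0" for \<alpha>
  proof -
    have "Top A \<alpha> u k = (\<integral>x. (0 :: complex^'m) \<partial>cube \<alpha>)"
      unfolding Top_def
    proof (rule Bochner_Integration.integral_cong[OF refl])
      fix x assume x: "x \<in> space (cube \<alpha>)"
      have "norm (A \<alpha> k x) \<le> real CARD('m) * mx A \<alpha>" by (rule norm_le_mx[OF p cA space_dom[OF k x]])
      then have "A \<alpha> k x = 0" using mx0 by simp
      then show "A \<alpha> k x *v u (merge_pt \<alpha> k x) = 0" by simp
    qed
    then show ?thesis by simp
  qed
  then show "opL A u k = 0" unfolding opL_Top by simp
qed

lemma sets_unitI_Ico: "0 \<le> a \<Longrightarrow> b \<le> 1 \<Longrightarrow> {a ..< b} \<in> sets unitI"
  unfolding unitI_def by (subst sets_restrict_space_iff) auto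

lemma emeasure_unitI_Ico: "0 \<le> a \<Longrightarrow> a \<le> b \<Longrightarrow> b \<le> 1 \<Longrightarrow> emeasure unitI {a ..< b} = ennreal (b - a)"
  unfolding unitI_def by (subst emeasure_restrict_space) auto

lemma emeasure_box:
  fixes I :: "'n::finite set"
  assumes H: "\<And>i. i \<in> I \<Longrightarrow> 0 \<le> a i \<and> a i \<le> b i \<and> b i \<le> 1"
  shows "emeasure (cube I) (Pi\<^sub>E I (\<lambda>i. {a i ..< b i})) = (\<Prod>i\<in>I. ennreal (b i - a i))"
proof -
  interpret P: product_sigma_finite "\<lambda>_. unitI" by (rule psf)
  have "emeasure (cube I) (Pi\<^sub>E I (\<lambda>i. {a i ..< b i})) = (\<Prod>i\<in>I. emeasure unitI {a i ..< b i})"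
    unfolding cube_def using H by (intro P.emeasure_PiM) (auto intro!: sets_unitI_Ico)
  also have "\<dots> = (\<Prod>i\<in>I. ennreal (b i - a i))"
    using H by (intro prod.cong refl emeasure_unitI_Ico) auto
  finally show ?thesis .
qed

lemma measure_box:
  fixes I :: "'n::finite set"
  assumes H: "\<And>i. i \<in> I \<Longrightarrow> 0 \<le> a i \<and> a i \<le> b i \<and> b i \<le> 1"
  shows "measure (cube I) (Pi\<^sub>E I (\<lambda>i. {a i ..< b i})) = (\<Prod>i\<in>I. (b i - a i))"
proof -
  have "(\<Prod>i\<in>I. ennreal (b i - a i)) = ennreal (\<Prod>i\<in>I. (b i - a i))"
    using H by (intro prod_ennreal) auto
  moreover have "(\<Prod>i\<in>I. (b i - a i)) \<ge> 0" using H by (intro prod_nonneg) auto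
  moreover have "emeasure (cube I) (Pi\<^sub>E I (\<lambda>i. {a i ..< b i})) = (\<Prod>i\<in>I. ennreal (b i - a i))"
    by (rule emeasure_box) (use H in auto)
  ultimately show ?thesis unfolding measure_def by simp
qed

lemma norm_axis_c: "norm (axis s (1::complex) :: complex^'m::finite) = 1"
proof -
  have "(\<Sum>i\<in>UNIV. (norm ((axis s (1::complex) :: complex^'m) $ i))\<^sup>2) = (\<Sum>i\<in>UNIV. if i = s then 1 else (0::real))"
    by (rule sum.cong) (auto simp: axis_def)
  then show ?thesis unfolding norm_vec_def L2_set_def by simp
qed

context
  fixes A :: "('n::finite, 'm::finite) coeffs" and p :: nat and \<alpha>0 :: "'n set"
    and k0 x0 :: "'n \<Rightarrow> real" and s :: 'm
  assumes p: "p > 0" and cA: "\<forall>\<alpha>. cc p \<alpha> (A \<alpha>)" and kx0: "(k0, x0) \<in> dom_pts \<alpha>0"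
begin

definition "KK i = cidx p (k0 i)"
definition "JJ i = (if i \<in> \<alpha>0 then cidx p (x0 i) else KK i)"
definition "lo i = real (JJ i) / real p"
definition "RR \<epsilon> i = {lo i ..< lo i + \<epsilon>}"
definition "sa \<epsilon> i = (if i \<in> \<alpha>0 then real (KK i) / real p + 1 / (2 * real p) else lo i)"
definition "sb \<epsilon> i = (if i \<in> \<alpha>0 then (real (KK i) + 1) / real p else lo i + \<epsilon>)"
definition "SS \<epsilon> i = {sa \<epsilon> i ..< sb \<epsilon> i}"
definition "ue \<epsilon> y = (indicator (Pi\<^sub>E UNIV (RR \<epsilon>)) y :: real) *\<^sub>R (axis s 1 :: complex^'m)"
definition "xJ \<alpha> = restrict lo \<alpha>"
definition "cvec \<alpha> = A \<alpha> k0 (xJ \<alpha>) *v (axis s 1 :: complex^'m)"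

lemma KK_lt: "KK i < p"
  using kx0 cidx_lt[OF p] unfolding KK_def dom_pts_def by (auto simp: PiE_def Pi_def)

lemma JJ_lt: "JJ i < p"
  using kx0 cidx_lt[OF p] KK_lt unfolding JJ_def dom_pts_def by (auto simp: PiE_def Pi_def)

lemma pp: "real p > 0" using p by simp

lemma lo_ge: "lo i \<ge> 0" unfolding lo_def by simp

lemma lo_eps: "\<epsilon> < 1 / (2 * real p) \<Longrightarrow> lo i + \<epsilon> < (real (JJ i) + 1) / real p"
proof -
  assume e: "\<epsilon> < 1 / (2 * real p)"
  have "1 / (2 * real p) \<le> 1 / real p" using pp by (simp add: frac_le)
  then show ?thesis using e unfolding lo_def by (simp add: add_divide_distrib)
qed

lemma cell_le1: "n < p \<Longrightarrow> (real n + 1) / real p \<le> 1"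
  using pp by (simp add: field_simps)

lemma cidx_in_cell: "real n / real p \<le> y \<Longrightarrow> y < (real n + 1) / real p \<Longrightarrow> cidx p y = n"
proof -
  assume a: "real n / real p \<le> y" "y < (real n + 1) / real p"
  have "0 \<le> y" using a(1) by (meson divide_nonneg_nonneg of_nat_0_le_iff order_trans)
  then show ?thesis using chi_cidx[OF p, of y n] a unfolding chi_def by (auto simp: indicator_def split: if_splits)
qed

lemma RR_cidx: "\<epsilon> < 1 / (2 * real p) \<Longrightarrow> y \<in> RR \<epsilon> i \<Longrightarrow> cidx p y = JJ i"
  using lo_eps[of \<epsilon> i] unfolding RR_def by (intro cidx_in_cell) (auto simp: lo_def)

lemma SS_cidx: "\<epsilon> < 1 / (2 * real p) \<Longrightarrow> y \<in> SS \<epsilon> i \<Longrightarrow> cidx p y = KK i"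
proof -
  assume e: "\<epsilon> < 1 / (2 * real p)" and y: "y \<in> SS \<epsilon> i"
  show ?thesis
  proof (cases "i \<in> \<alpha>0")
    case True
    have "real (KK i) / real p \<le> y" using y True pp unfolding SS_def sa_def by (auto intro: order_trans[rotated])
    moreover have "y < (real (KK i) + 1) / real p" using y True unfolding SS_def sb_def by auto
    ultimately show ?thesis by (rule cidx_in_cell)
  next
    case False
    then show ?thesis using RR_cidx[OF e, of y i] y unfolding SS_def sa_def sb_def RR_def JJ_def by auto
  qed
qed

lemma SS_notin_RR: "\<epsilon> < 1 / (2 * real p) \<Longrightarrow> i \<in> \<alpha>0 \<Longrightarrow> y \<in> SS \<epsilon> i \<Longrightarrow> y \<notin> RR \<epsilon> i"
proof
  assume e: "\<epsilon> < 1 / (2 * real p)" and i: "i \<in> \<alpha>0" and y: "y \<in> SS \<epsilon> i" and yR: "y \<in> RR \<epsilon> i"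
  have c1: "cidx p y = KK i" by (rule SS_cidx[OF e y])
  have c2: "cidx p y = JJ i" by (rule RR_cidx[OF e yR])
  have "real (KK i) / real p + 1 / (2 * real p) \<le> y" using y i unfolding SS_def sa_def by auto
  moreover have "y < real (JJ i) / real p + \<epsilon>" using yR unfolding RR_def lo_def by auto
  moreover have "KK i = JJ i" using c1 c2 by simp
  ultimately show False using e by simp
qed

lemma SS_RR: "i \<notin> \<alpha>0 \<Longrightarrow> SS \<epsilon> i = RR \<epsilon> i"
  unfolding SS_def RR_def sa_def sb_def by simp

lemma sab: "0 < \<epsilon> \<Longrightarrow> \<epsilon> < 1 / (2 * real p) \<Longrightarrow> 0 \<le> sa \<epsilon> i \<and> sa \<epsilon> i < sb \<epsilon> i \<and> sb \<epsilon> i \<le> 1"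
proof -
  assume e: "0 < \<epsilon>" "\<epsilon> < 1 / (2 * real p)"
  show ?thesis
  proof (cases "i \<in> \<alpha>0")
    case True
    have "real (KK i) / real p + 1 / (2 * real p) < (real (KK i) + 1) / real p"
      using pp by (simp add: field_simps)
    then show ?thesis using True cell_le1[OF KK_lt] unfolding sa_def sb_def by simp
  next
    case False
    then show ?thesis using e lo_ge[of i] lo_eps[OF e(2), of i] cell_le1[OF JJ_lt, of i] unfolding sa_def sb_def by simp
  qed
qed

lemma RR_sub: "0 < \<epsilon> \<Longrightarrow> \<epsilon> < 1 / (2 * real p) \<Longrightarrow> 0 \<le> lo i \<and> lo i \<le> lo i + \<epsilon> \<and> lo i + \<epsilon> \<le> 1"
  using lo_ge[of i] lo_eps[of \<epsilon> i] cell_le1[OF JJ_lt, of i] by simp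

lemma RR_sets: "0 < \<epsilon> \<Longrightarrow> \<epsilon> < 1 / (2 * real p) \<Longrightarrow> Pi\<^sub>E I (RR \<epsilon>) \<in> sets (cube I)"
  unfolding cube_def RR_def using RR_sub by (intro sets_PiM_I_finite sets_unitI_Ico) auto

lemma ue_L2: "0 < \<epsilon> \<Longrightarrow> \<epsilon> < 1 / (2 * real p) \<Longrightarrow> isL2 (ue \<epsilon>)"
proof -
  assume e: "0 < \<epsilon>" "\<epsilon> < 1 / (2 * real p)"
  interpret Q: prob_space "cube (UNIV :: 'n set)" by (rule cube_prob)
  have m: "ue \<epsilon> \<in> borel_measurable (cube UNIV)"
    unfolding ue_def[abs_def] using RR_sets[OF e, of UNIV] by measurable
  have "integrable (cube UNIV) (\<lambda>k. (norm (ue \<epsilon> k))\<^sup>2)"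
  proof (rule Q.integrable_const_bound[where B=1])
    show "AE x in cube UNIV. norm ((norm (ue \<epsilon> x))\<^sup>2) \<le> 1"
      by (intro AE_I2) (simp add: ue_def indicator_def norm_axis_c)
    show "(\<lambda>k. (norm (ue \<epsilon> k))\<^sup>2) \<in> borel_measurable (cube UNIV)" using m by measurable
  qed
  then show ?thesis unfolding isL2_def using m by simp
qed

lemma Top_ue:
  assumes e: "0 < \<epsilon>" "\<epsilon> < 1 / (2 * real p)" and k: "k \<in> Pi\<^sub>E UNIV (SS \<epsilon>)"
  shows "Top A \<alpha> (ue \<epsilon>) k = (if \<alpha>0 \<subseteq> \<alpha> then \<epsilon> ^ card \<alpha> *\<^sub>R cvec \<alpha> else 0)"
proof -
  have kS: "k i \<in> SS \<epsilon> i" for i using k by auto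
  have ksp: "k \<in> space (cube UNIV)" unfolding space_cube using kS sab[OF e] unfolding SS_def
    by (auto simp: PiE_def Pi_def) (meson order_trans, meson less_le_trans)
  show ?thesis
  proof (cases "\<alpha>0 \<subseteq> \<alpha>")
    case False
    then obtain i where i: "i \<in> \<alpha>0" "i \<notin> \<alpha>" by blast
    have "Top A \<alpha> (ue \<epsilon>) k = (\<integral>x. (0::complex^'m) \<partial>cube \<alpha>)"
      unfolding Top_def
    proof (rule Bochner_Integration.integral_cong[OF refl])
      fix x
      have "merge_pt \<alpha> k x \<notin> Pi\<^sub>E UNIV (RR \<epsilon>)"
      proof
        assume "merge_pt \<alpha> k x \<in> Pi\<^sub>E UNIV (RR \<epsilon>)"
        then have "merge_pt \<alpha> k x i \<in> RR \<epsilon> i" by (auto simp: PiE_def Pi_def)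
        then show False using SS_notin_RR[OF e(2) i(1) kS[of i]] i(2) unfolding merge_pt_def by simp
      qed
      then show "A \<alpha> k x *v ue \<epsilon> (merge_pt \<alpha> k x) = 0" unfolding ue_def by simp
    qed
    then show ?thesis using False by simp
  next
    case True
    have eq: "A \<alpha> k x *v ue \<epsilon> (merge_pt \<alpha> k x) = (indicator (Pi\<^sub>E \<alpha> (RR \<epsilon>)) x :: real) *\<^sub>R cvec \<alpha>"
      if x: "x \<in> space (cube \<alpha>)" for x
    proof (cases "x \<in> Pi\<^sub>E \<alpha> (RR \<epsilon>)")
      case True
      have mem: "merge_pt \<alpha> k x \<in> Pi\<^sub>E UNIV (RR \<epsilon>)"
      proof -
        have "merge_pt \<alpha> k x i \<in> RR \<epsilon> i" for i
        proof (cases "i \<in> \<alpha>")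
          case True then show ?thesis using \<open>x \<in> Pi\<^sub>E \<alpha> (RR \<epsilon>)\<close> unfolding merge_pt_def by auto
        next
          case False then have "i \<notin> \<alpha>0" using \<open>\<alpha>0 \<subseteq> \<alpha>\<close> by auto
          then show ?thesis using kS[of i] SS_RR[of i \<epsilon>] False unfolding merge_pt_def by simp
        qed
        then show ?thesis by auto
      qed
      have d1: "(k, x) \<in> dom_pts \<alpha>" by (rule space_dom[OF ksp x])
      have lo1: "lo i < 1" for i using RR_sub[OF e, of i] e(1) by linarith
      have d2: "(k0, xJ \<alpha>) \<in> dom_pts \<alpha>" using kx0 RR_sub[OF e] lo1 unfolding dom_pts_def xJ_def
        by (auto simp: PiE_def Pi_def)
      have sc: "samecell p \<alpha> k x k0 (xJ \<alpha>)"
        unfolding samecell_def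
      proof (intro conjI ballI allI)
        fix i show "cidx p (k i) = cidx p (k0 i)" using SS_cidx[OF e(2) kS[of i]] unfolding KK_def .
      next
        fix i assume i: "i \<in> \<alpha>"
        have "cidx p (x i) = JJ i" using RR_cidx[OF e(2)] True i by (auto simp: PiE_def)
        moreover have "cidx p (xJ \<alpha> i) = JJ i" using i p unfolding xJ_def lo_def by (simp add: cidx_def)
        ultimately show "cidx p (x i) = cidx p (xJ \<alpha> i)" by simp
      qed
      have "A \<alpha> k x = A \<alpha> k0 (xJ \<alpha>)" using cA d1 d2 sc unfolding cc_def by blast
      then show ?thesis using mem True unfolding ue_def cvec_def by simp
    next
      case False
      have "merge_pt \<alpha> k x \<notin> Pi\<^sub>E UNIV (RR \<epsilon>)"
        using False x unfolding merge_pt_def space_cube by (auto simp: PiE_def Pi_def extensional_def)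
      then show ?thesis using False unfolding ue_def by simp
    qed
    have "Top A \<alpha> (ue \<epsilon>) k = (\<integral>x. (indicator (Pi\<^sub>E \<alpha> (RR \<epsilon>)) x :: real) *\<^sub>R cvec \<alpha> \<partial>cube \<alpha>)"
      unfolding Top_def by (rule Bochner_Integration.integral_cong[OF refl eq])
    also have "\<dots> = measure (cube \<alpha>) (Pi\<^sub>E \<alpha> (RR \<epsilon>) \<inter> space (cube \<alpha>)) *\<^sub>R cvec \<alpha>"
    proof -
      interpret Ca: prob_space "cube \<alpha>" by (rule cube_prob)
      have "integrable (cube \<alpha>) (indicator (Pi\<^sub>E \<alpha> (RR \<epsilon>)) :: _ \<Rightarrow> real)"
        using RR_sets[OF e, of \<alpha>] by (intro Ca.integrable_const_bound[where B=1]) (auto simp: indicator_def)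
      then show ?thesis by simp
    qed
    also have "Pi\<^sub>E \<alpha> (RR \<epsilon>) \<inter> space (cube \<alpha>) = Pi\<^sub>E \<alpha> (\<lambda>i. {lo i ..< lo i + \<epsilon>})"
      using RR_sub[OF e] unfolding RR_def space_cube by (auto simp: PiE_def Pi_def) (meson order_trans, meson less_le_trans)
    also have "measure (cube \<alpha>) (Pi\<^sub>E \<alpha> (\<lambda>i. {lo i ..< lo i + \<epsilon>})) = \<epsilon> ^ card \<alpha>"
      using measure_box[of \<alpha> lo "\<lambda>i. lo i + \<epsilon>"] RR_sub[OF e] by simp
    finally show ?thesis using True by simp
  qed
qed

lemma E_eps:
  assumes Z: "\<forall>u. isL2 u \<longrightarrow> (AE k in cube UNIV. opL A u k = 0)" and e: "0 < \<epsilon>" "\<epsilon> < 1 / (2 * real p)"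
  shows "(\<Sum>\<alpha>\<in>UNIV. if \<alpha>0 \<subseteq> \<alpha> then \<epsilon> ^ card \<alpha> *\<^sub>R cvec \<alpha> else 0) = 0"
proof -
  have AE: "AE k in cube UNIV. opL A (ue \<epsilon>) k = 0" using Z ue_L2[OF e] by blast
  let ?G = "Pi\<^sub>E (UNIV :: 'n set) (SS \<epsilon>)"
  have G: "?G = Pi\<^sub>E UNIV (\<lambda>i. {sa \<epsilon> i ..< sb \<epsilon> i})" unfolding SS_def ..
  have Gsp: "?G \<subseteq> space (cube UNIV)"
    unfolding G space_cube using sab[OF e] by (auto simp: PiE_def Pi_def) (meson order_trans, meson less_le_trans)
  have Gpos: "emeasure (cube UNIV) ?G \<noteq> 0"
  proof -
    have "emeasure (cube UNIV) ?G = (\<Prod>i\<in>UNIV. ennreal (sb \<epsilon> i - sa \<epsilon> i))"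
      unfolding G by (rule emeasure_box) (use sab[OF e] in \<open>auto intro: less_imp_le\<close>)
    also have "\<dots> = ennreal (\<Prod>i\<in>UNIV. (sb \<epsilon> i - sa \<epsilon> i))"
      using sab[OF e] by (intro prod_ennreal) (auto intro: less_imp_le)
    also have "\<dots> \<noteq> 0"
    proof -
      have "(\<Prod>i\<in>UNIV. (sb \<epsilon> i - sa \<epsilon> i)) > 0" using sab[OF e] by (intro prod_pos) auto
      then show ?thesis using sab[OF e] by (auto dest: sym) (metis less_irrefl)
    qed
    finally show ?thesis .
  qed
  obtain N where N: "{k \<in> space (cube UNIV). \<not> opL A (ue \<epsilon>) k = 0} \<subseteq> N" "emeasure (cube UNIV) N = 0" "N \<in> sets (cube UNIV)"
    using AE by (rule AE_E)
  have "\<exists>k\<in>?G. opL A (ue \<epsilon>) k = 0"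
  proof (rule ccontr)
    assume "\<not> ?thesis"
    then have "?G \<subseteq> N" using N(1) Gsp by blast
    then have "emeasure (cube UNIV) ?G \<le> emeasure (cube UNIV) N" using N(3) by (rule emeasure_mono)
    then show False using N(2) Gpos by simp
  qed
  then obtain k where k: "k \<in> ?G" and z: "opL A (ue \<epsilon>) k = 0" by blast
  have "opL A (ue \<epsilon>) k = (\<Sum>\<alpha>\<in>UNIV. if \<alpha>0 \<subseteq> \<alpha> then \<epsilon> ^ card \<alpha> *\<^sub>R cvec \<alpha> else 0)"
    unfolding opL_Top using Top_ue[OF e k] by simp
  then show ?thesis using z by simp
qed

lemma cvec0:
  assumes Z: "\<forall>u. isL2 u \<longrightarrow> (AE k in cube UNIV. opL A u k = 0)"
  shows "cvec \<alpha>0 = 0"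
proof -
  define h where "h \<epsilon> = (\<Sum>\<alpha>\<in>{\<alpha>. \<alpha>0 \<subseteq> \<alpha>}. \<epsilon> ^ (card \<alpha> - card \<alpha>0) *\<^sub>R cvec \<alpha>)" for \<epsilon> :: real
  have hc: "continuous_on UNIV h" unfolding h_def by (intro continuous_intros)
  have h0: "h 0 = cvec \<alpha>0"
  proof -
    have "h 0 = (\<Sum>\<alpha>\<in>{\<alpha>. \<alpha>0 \<subseteq> \<alpha>}. if \<alpha> = \<alpha>0 then cvec \<alpha> else 0)"
      unfolding h_def
    proof (rule sum.cong[OF refl])
      fix \<alpha> :: "'n set" assume a: "\<alpha> \<in> {\<alpha>. \<alpha>0 \<subseteq> \<alpha>}"
      show "(0::real) ^ (card \<alpha> - card \<alpha>0) *\<^sub>R cvec \<alpha> = (if \<alpha> = \<alpha>0 then cvec \<alpha> else 0)"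
      proof (cases "\<alpha> = \<alpha>0")
        case False
        then have "\<alpha>0 \<subset> \<alpha>" using a by auto
        then have "card \<alpha>0 < card \<alpha>" by (intro psubset_card_mono) auto
        then show ?thesis using False by simp
      qed simp
    qed
    also have "\<dots> = cvec \<alpha>0" by (simp add: sum.delta)
    finally show ?thesis .
  qed
  have ev: "eventually (\<lambda>\<epsilon>. h \<epsilon> = 0) (at_right 0)"
    unfolding eventually_at_right_field
  proof (intro exI conjI allI impI)
    show "(0::real) < 1 / (2 * real p)" using pp by simp
    fix \<epsilon> :: real assume e: "0 < \<epsilon>" "\<epsilon> < 1 / (2 * real p)"
    have "(\<Sum>\<alpha>\<in>UNIV. if \<alpha>0 \<subseteq> \<alpha> then \<epsilon> ^ card \<alpha> *\<^sub>R cvec \<alpha> else 0) = \<epsilon> ^ card \<alpha>0 *\<^sub>R h \<epsilon>"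
    proof -
      have "(\<Sum>\<alpha>\<in>UNIV. if \<alpha>0 \<subseteq> \<alpha> then \<epsilon> ^ card \<alpha> *\<^sub>R cvec \<alpha> else 0) = (\<Sum>\<alpha>\<in>{\<alpha>. \<alpha>0 \<subseteq> \<alpha>}. \<epsilon> ^ card \<alpha> *\<^sub>R cvec \<alpha>)"
        by (simp add: sum.If_cases Collect_conv_if)
      also have "\<dots> = (\<Sum>\<alpha>\<in>{\<alpha>. \<alpha>0 \<subseteq> \<alpha>}. \<epsilon> ^ card \<alpha>0 *\<^sub>R (\<epsilon> ^ (card \<alpha> - card \<alpha>0) *\<^sub>R cvec \<alpha>))"
      proof (rule sum.cong[OF refl])
        fix \<alpha> :: "'n set" assume "\<alpha> \<in> {\<alpha>. \<alpha>0 \<subseteq> \<alpha>}"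
        then have "card \<alpha>0 \<le> card \<alpha>" by (intro card_mono) auto
        then have "\<epsilon> ^ card \<alpha> = \<epsilon> ^ card \<alpha>0 * \<epsilon> ^ (card \<alpha> - card \<alpha>0)"
          by (simp add: power_add[symmetric])
        then show "\<epsilon> ^ card \<alpha> *\<^sub>R cvec \<alpha> = \<epsilon> ^ card \<alpha>0 *\<^sub>R (\<epsilon> ^ (card \<alpha> - card \<alpha>0) *\<^sub>R cvec \<alpha>)" by simp
      qed
      also have "\<dots> = \<epsilon> ^ card \<alpha>0 *\<^sub>R h \<epsilon>" unfolding h_def by (simp add: scaleR_sum_right)
      finally show ?thesis .
    qed
    then have "\<epsilon> ^ card \<alpha>0 *\<^sub>R h \<epsilon> = 0" using E_eps[OF Z e] by simp
    then show "h \<epsilon> = 0" using e by simp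
  qed
  have "(h \<longlongrightarrow> h 0) (at_right 0)"
    using hc by (meson UNIV_I continuous_on_def tendsto_within_subset subset_UNIV)
  moreover have "(h \<longlongrightarrow> 0) (at_right 0)" using ev by (rule tendsto_eventually)
  ultimately have "h 0 = 0" using tendsto_unique[OF trivial_limit_at_right_real] by blast
  then show ?thesis using h0 by simp
qed

lemma col0:
  assumes Z: "\<forall>u. isL2 u \<longrightarrow> (AE k in cube UNIV. opL A u k = 0)"
  shows "A \<alpha>0 k0 x0 *v (axis s 1 :: complex^'m) = 0"
proof -
  have q1: "0 < 1 / (4 * real p)" using pp by simp
  have q2: "1 / (4 * real p) < 1 / (2 * real p)" using pp by (simp add: frac_less2)
  have lo1: "lo i < 1" for i
    using RR_sub[OF q1 q2, of i] q1 by linarith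
  have d2: "(k0, xJ \<alpha>0) \<in> dom_pts \<alpha>0" using kx0 lo_ge lo1 unfolding dom_pts_def xJ_def
    by (auto simp: PiE_def Pi_def less_imp_le)
  have sc: "samecell p \<alpha>0 k0 x0 k0 (xJ \<alpha>0)"
    unfolding samecell_def using p by (auto simp: xJ_def lo_def JJ_def cidx_def)
  have "A \<alpha>0 k0 x0 = A \<alpha>0 k0 (xJ \<alpha>0)" using cA kx0 d2 sc unfolding cc_def by blast
  then show ?thesis using cvec0[OF Z] unfolding cvec_def by simp
qed

end

lemma mv_axis: "((M :: complex^'m::finite^'m) *v axis s 1) $ i = M $ i $ s"
proof -
  have "(M *v axis s 1) $ i = (\<Sum>j\<in>UNIV. M $ i $ j * axis s 1 $ j)" by (simp add: matrix_vector_mult_def)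
  also have "\<dots> = (\<Sum>j\<in>UNIV. if j = s then M $ i $ j else 0)" by (rule sum.cong) (auto simp: axis_def)
  also have "\<dots> = M $ i $ s" by simp
  finally show ?thesis .
qed

lemma uniq:
  fixes A :: "('n::finite, 'm::finite) coeffs"
  assumes p: "p > 0" and cA: "\<forall>\<alpha>. cc p \<alpha> (A \<alpha>)"
    and Z: "\<forall>u. isL2 u \<longrightarrow> (AE k in cube UNIV. opL A u k = 0)"
  shows "normL A = 0"
proof -
  have A0: "A \<alpha> k x = 0" if kx: "(k, x) \<in> dom_pts \<alpha>" for \<alpha> k x
  proof -
    have "A \<alpha> k x *v (axis s 1 :: complex^'m) = 0" for s using col0[OF p cA kx Z] .
    then have "A \<alpha> k x $ i $ s = 0" for i s using mv_axis[of "A \<alpha> k x" s i] by simp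
    then show ?thesis by (simp add: vec_eq_iff)
  qed
  have "mx A \<alpha> = 0" for \<alpha>
  proof (rule antisym)
    show "mx A \<alpha> \<le> 0" by (rule mx_le[OF p cA]) (simp add: rsum_def A0)
    show "0 \<le> mx A \<alpha>" by (rule mx_nonneg[OF p cA])
  qed
  then show ?thesis unfolding normL_mx by simp
qed

theorem theorem1:
  fixes p :: nat
  assumes "p > 0"
  shows
    \<comment> \<open>(1) norm on L (L is a complex vector space; zero norm iff zero operator on L^2)\<close>
    "(\<forall>A B :: ('n::finite, 'm::finite) coeffs. is_coeffs p A \<longrightarrow> is_coeffs p B \<longrightarrow>
        is_coeffs p (addL A B) \<and> normL (addL A B) \<le> normL A + normL B)
   \<and> (\<forall>(A :: ('n, 'm) coeffs) c. is_coeffs p A \<longrightarrow>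
        is_coeffs p (scaleL c A) \<and> normL (scaleL c A) = norm c * normL A)
   \<and> (\<forall>A :: ('n, 'm) coeffs. is_coeffs p A \<longrightarrow>
        normL A \<ge> 0 \<and>
        (normL A = 0 \<longleftrightarrow> (\<forall>u. isL2 u \<longrightarrow> (AE k in cube UNIV. opL A u k = 0))))
   \<and> \<comment> \<open>(2) stronger than the operator norm of bounded operators on L^2\<close>
     (\<exists>C. \<forall>A :: ('n, 'm) coeffs. is_coeffs p A \<longrightarrow> (\<forall>u. isL2 u \<longrightarrow>
        isL2 (opL A u) \<and> L2norm (opL A u) \<le> C * normL A * L2norm u))
   \<and> \<comment> \<open>(3) L-convergence iff uniform convergence of all coefficients\<close>
     (\<forall>(S :: nat \<Rightarrow> ('n, 'm) coeffs) A. (\<forall>n. is_coeffs p (S n)) \<longrightarrow> is_coeffs p A \<longrightarrow>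
        ((\<lambda>n. normL (diffL (S n) A)) \<longlonglongrightarrow> 0 \<longleftrightarrow>
         (\<forall>\<alpha>. uniform_limit (dom_pts \<alpha>) (\<lambda>n (k, x). S n \<alpha> k x) (\<lambda>(k, x). A \<alpha> k x) sequentially)))
   \<and> \<comment> \<open>(4) completeness\<close>
     (\<forall>S :: nat \<Rightarrow> ('n, 'm) coeffs. (\<forall>n. is_coeffs p (S n)) \<longrightarrow>
        (\<forall>e>0. \<exists>n0. \<forall>m\<ge>n0. \<forall>n\<ge>n0. normL (diffL (S m) (S n)) < e) \<longrightarrow>
        (\<exists>A. is_coeffs p A \<and> (\<lambda>n. normL (diffL (S n) A)) \<longlonglongrightarrow> 0))
   \<and> \<comment> \<open>(4) closure under composition and submultiplicativity\<close>
     (\<forall>A B :: ('n, 'm) coeffs. is_coeffs p A \<longrightarrow> is_coeffs p B \<longrightarrow>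
        (\<exists>C. is_coeffs p C \<and>
             (\<forall>u. isL2 u \<longrightarrow> (AE k in cube UNIV. opL C u k = opL A (opL B u) k)) \<and>
             normL C \<le> normL A * normL B))"
proof -
  note p = assms
  have c1: "\<forall>A B :: ('n, 'm) coeffs. is_coeffs p A \<longrightarrow> is_coeffs p B \<longrightarrow>
        is_coeffs p (addL A B) \<and> normL (addL A B) \<le> normL A + normL B"
    using part_add[OF p] by blast
  have c2: "\<forall>(A :: ('n, 'm) coeffs) c. is_coeffs p A \<longrightarrow>
        is_coeffs p (scaleL c A) \<and> normL (scaleL c A) = norm c * normL A"
    using part_scale[OF p] by blast
  have c3: "\<forall>A :: ('n, 'm) coeffs. is_coeffs p A \<longrightarrow>
        normL A \<ge> 0 \<and>
        (normL A = 0 \<longleftrightarrow> (\<forall>u. isL2 u \<longrightarrow> (AE k in cube UNIV. opL A u k = 0)))"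
  proof (intro allI impI conjI)
    fix A :: "('n, 'm) coeffs" assume A: "is_coeffs p A"
    then have cA: "\<forall>\<alpha>. cc p \<alpha> (A \<alpha>)" using is_coeffs_iff[OF p] by blast
    show "normL A \<ge> 0" by (rule normL_nonneg[OF p cA])
    show "normL A = 0 \<longleftrightarrow> (\<forall>u. isL2 u \<longrightarrow> (AE k in cube UNIV. opL A u k = 0))"
    proof
      assume "normL A = 0"
      then show "\<forall>u. isL2 u \<longrightarrow> (AE k in cube UNIV. opL A u k = 0)" using zero_dir[OF p cA] by blast
    next
      assume "\<forall>u. isL2 u \<longrightarrow> (AE k in cube UNIV. opL A u k = 0)"
      then show "normL A = 0" by (rule uniq[OF p cA])
    qed
  qed
  have c4: "\<exists>C. \<forall>A :: ('n, 'm) coeffs. is_coeffs p A \<longrightarrow> (\<forall>u. isL2 u \<longrightarrow>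
        isL2 (opL A u) \<and> L2norm (opL A u) \<le> C * normL A * L2norm u)"
  proof (intro exI allI impI)
    fix A :: "('n, 'm) coeffs" and u :: "('n \<Rightarrow> real) \<Rightarrow> complex^'m" assume A: "is_coeffs p A" and u: "isL2 u"
    then have cA: "\<forall>\<alpha>. cc p \<alpha> (A \<alpha>)" using is_coeffs_iff[OF p] by blast
    show "isL2 (opL A u) \<and> L2norm (opL A u) \<le> sqrt (K0 TYPE('n) TYPE('m)) * normL A * L2norm u"
      by (rule part_bound[OF p cA u])
  qed
  have c5: "\<forall>(S :: nat \<Rightarrow> ('n, 'm) coeffs) A. (\<forall>n. is_coeffs p (S n)) \<longrightarrow> is_coeffs p A \<longrightarrow>
        ((\<lambda>n. normL (diffL (S n) A)) \<longlonglongrightarrow> 0 \<longleftrightarrow>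
         (\<forall>\<alpha>. uniform_limit (dom_pts \<alpha>) (\<lambda>n (k, x). S n \<alpha> k x) (\<lambda>(k, x). A \<alpha> k x) sequentially))"
  proof (intro allI impI)
    fix S :: "nat \<Rightarrow> ('n, 'm) coeffs" and A :: "('n, 'm) coeffs"
    assume S: "\<forall>n. is_coeffs p (S n)" and A: "is_coeffs p A"
    have cS: "\<forall>n. \<forall>\<alpha>. cc p \<alpha> (S n \<alpha>)" using S is_coeffs_iff[OF p] by blast
    have cA: "\<forall>\<alpha>. cc p \<alpha> (A \<alpha>)" using A is_coeffs_iff[OF p] by blast
    show "(\<lambda>n. normL (diffL (S n) A)) \<longlonglongrightarrow> 0 \<longleftrightarrow>
         (\<forall>\<alpha>. uniform_limit (dom_pts \<alpha>) (\<lambda>n (k, x). S n \<alpha> k x) (\<lambda>(k, x). A \<alpha> k x) sequentially)"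
      by (rule part_conv[OF p cS cA])
  qed
  have c6: "\<forall>S :: nat \<Rightarrow> ('n, 'm) coeffs. (\<forall>n. is_coeffs p (S n)) \<longrightarrow>
        (\<forall>e>0. \<exists>n0. \<forall>m\<ge>n0. \<forall>n\<ge>n0. normL (diffL (S m) (S n)) < e) \<longrightarrow>
        (\<exists>A. is_coeffs p A \<and> (\<lambda>n. normL (diffL (S n) A)) \<longlonglongrightarrow> 0)"
    using part_complete[OF p] by blast
  have c7: "\<forall>A B :: ('n, 'm) coeffs. is_coeffs p A \<longrightarrow> is_coeffs p B \<longrightarrow>
        (\<exists>C. is_coeffs p C \<and>
             (\<forall>u. isL2 u \<longrightarrow> (AE k in cube UNIV. opL C u k = opL A (opL B u) k)) \<and>
             normL C \<le> normL A * normL B)"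
    using part_comp[OF p] by blast
  show ?thesis using c1 c2 c3 c4 c5 c6 c7 by blast
qed

end
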